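(* For any constant $\gamma>0$, the map $\mathrm{Prox}_p:\mathbb{R}^n\to\mathbb{R}^n$ is $\gamma$-order semismooth on $\mathbb{R}^n$ with respect to the multifunction $\mathcal M$; that is, $\mathrm{Prox}_p$ is directionally differentiable everywhere, and for every $x\in\mathbb{R}^n$, $\mathrm{Prox}_p(x+\Delta x)-\mathrm{Prox}_p(x)-V\Delta x=O(\|\Delta x\|^{1+\gamma})$ as $\Delta x\to0$, uniformly over $V\in\mathcal M(x+\Delta x)$.
   Context: $\beta,\rho>0$; $p(x):=\beta\|x\|_1+\rho\sum_{1\le i<j\le n}|x_i-x_j|$; $\mathrm{Prox}_p(y):=\operatorname{argmin}_x\{\tfrac12\|x-y\|^2+p(x)\}$. $S_\rho(y):=\operatorname{argmin}_x\{\tfrac12\|x-y\|^2+\rho\sum_{i<j}|x_i-x_j|\}$. $w_k=n-2k+1$. $\mathcal D:=\{x: x_1\ge\cdots\ge x_n\}$, $\Pi_{\mathcal D}$ the Euclidean projection. $B\in\mathbb{R}^{(n-1)\times n}$ with $Bx=(x_1-x_2,\dots,x_{n-1}-x_n)^T$. For each $y$, $P_y$ is a fixed permutation matrix with $P_yy$ non-increasing. For $v\in\mathbb{R}^n$: $\mathcal M_{\mathcal D}(v)$ is the set of $\lambda\in\mathbb{R}^{n-1}$ with $\Pi_{\mathcal D}(v)-v+B^T\lambda=0$, $B\Pi_{\mathcal D}(v)\ge0$, $\lambda\le0$, $\lambda^TB\Pi_{\mathcal D}(v)=0$; $\mathcal I_{\mathcal D}(v):=\{i: B_i\Pi_{\mathcal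 D}(v)=0\}$; $\mathcal K_{\mathcal D}(v):=\{K:\exists\lambda\in\mathcal M_{\mathcal D}(v),\ \mathrm{supp}(\lambda)\subseteq K\subseteq\mathcal I_{\mathcal D}(v),\ B_K\text{ full row rank}\}$; $\mathcal Q_{\mathcal D}(v):=\{I_n-B_K^T(B_KB_K^T)^{-1}B_K:K\in\mathcal K_{\mathcal D}(v)\}$; $\mathcal Q_{S_\rho}(y):=\{P_y^T\widehat QP_y:\widehat Q\in\mathcal Q_{\mathcal D}(P_yy-\rho w)\}$. $\partial_B\mathrm{Prox}_{\beta\|\cdot\|_1}(\eta)$ is the set of $\mathrm{Diag}(q)$ with $q_i=0$ if $|\eta_i|<\beta$, $q_i\in\{0,1\}$ if $|\eta_i|=\beta$, $q_i=1$ otherwise. $\mathcal M(y):=\{M \text{ symmetric}: M=\Theta Q,\ \Theta\in\partial_B\mathrm{Prox}_{\beta\|\cdot\|_1}(S_\rho(y)),\ Q\in\mathcal Q_{S_\rho}(y)\}$. *)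

theory Defs
  imports "HOL-Analysis.Analysis"
begin

text \<open>Vectors of R^n are rendered as real^'n, where the index type 'n is finite and
linearly ordered (its elements are the indices 1 < 2 < ... < n, n = CARD('n)).\<close>

definition pen_p :: "real \<Rightarrow> real \<Rightarrow> real^('n::{finite,linorder}) \<Rightarrow> real" where
  "pen_p \<beta> \<rho> x = \<beta> * (\<Sum>i\<in>UNIV. \<bar>x$i\<bar>) + \<rho> * (\<Sum>(i,j)\<in>{(i,j). i < j}. \<bar>x$i - x$j\<bar>)"

definition pen_clust :: "real \<Rightarrow> real^('n::{finite,linorder}) \<Rightarrow> real" where
  "pen_clust \<rho> x = \<rho> * (\<Sum>(i,j)\<in>{(i,j). i < j}. \<bar>x$i - x$j\<bar>)"

definition prox :: "(real^('n::finite) \<Rightarrow> real) \<Rightarrow> real^'n \<Rightarrow> real^'n" where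
  "prox f y = (THE x. \<forall>z. (1/2) * (norm (x - y))^2 + f x \<le> (1/2) * (norm (z - y))^2 + f z)"

text \<open>0-based position of an index: position k (1-based) is rk i + 1.\<close>
definition rk :: "('n::{finite,linorder}) \<Rightarrow> nat" where
  "rk i = card {j. j < i}"

definition wvec :: "real^('n::{finite,linorder})" where
  "wvec = (\<chi> i. real CARD('n) - 2 * real (rk i + 1) + 1)"

definition Dset :: "(real^('n::{finite,linorder})) set" where
  "Dset = {x. \<forall>i j. i \<le> j \<longrightarrow> x$j \<le> x$i}"

definition PiD :: "real^('n::{finite,linorder}) \<Rightarrow> real^('n::{finite,linorder})" where
  "PiD v = closest_point Dset v"

text \<open>Rows of B are indexed by the non-maximal indices i; row i is e_i - e_(succ i).\<close>
definition Brows :: "('n::{finite,linorder}) set" where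
  "Brows = {i. \<exists>j. i < j}"

definition succ_idx :: "('n::{finite,linorder}) \<Rightarrow> 'n" where
  "succ_idx i = Min {j. i < j}"

definition brow :: "('n::{finite,linorder}) \<Rightarrow> real^('n::{finite,linorder})" where
  "brow i = (\<chi> j. if j = i then 1 else if j = succ_idx i then -1 else 0)"

text \<open>B^T lambda, for lambda in R^(n-1) represented as a function on Brows (zero elsewhere).\<close>
definition BT :: "(('n::{finite,linorder}) \<Rightarrow> real) \<Rightarrow> real^('n::{finite,linorder})" where
  "BT lam = (\<Sum>i\<in>Brows. lam i *\<^sub>R brow i)"

definition MD :: "real^('n::{finite,linorder}) \<Rightarrow> (('n::{finite,linorder}) \<Rightarrow> real) set" where
  "MD v = {lam. (\<forall>i. i \<notin> Brows \<longrightarrow> lam i = 0) \<and>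
       PiD v - v + BT lam = 0 \<and>
       (\<forall>i\<in>Brows. brow i \<bullet> PiD v \<ge> 0) \<and>
       (\<forall>i\<in>Brows. lam i \<le> 0) \<and>
       (\<Sum>i\<in>Brows. lam i * (brow i \<bullet> PiD v)) = 0}"

definition ID :: "real^('n::{finite,linorder}) \<Rightarrow> ('n::{finite,linorder}) set" where
  "ID v = {i\<in>Brows. brow i \<bullet> PiD v = 0}"

definition full_row_rank :: "('n::{finite,linorder}) set \<Rightarrow> bool" where
  "full_row_rank K \<longleftrightarrow> K \<subseteq> Brows \<and>
     (\<forall>c::'n \<Rightarrow> real. (\<Sum>i\<in>K. c i *\<^sub>R brow i) = 0 \<longrightarrow> (\<forall>i\<in>K. c i = 0))"

definition KD :: "real^('n::{finite,linorder}) \<Rightarrow> (('n::{finite,linorder}) set) set" where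
  "KD v = {K. \<exists>lam\<in>MD v. {i. lam i \<noteq> 0} \<subseteq> K \<and> K \<subseteq> ID v \<and> full_row_rank K}"

text \<open>Gram matrix B_K B_K^T (indexed by K x K) and its inverse.\<close>
definition gram :: "('n::{finite,linorder}) set \<Rightarrow> ('n::{finite,linorder}) \<Rightarrow> ('n::{finite,linorder}) \<Rightarrow> real" where
  "gram K a b = brow a \<bullet> brow b"

definition gram_inv :: "('n::{finite,linorder}) set \<Rightarrow> ('n::{finite,linorder}) \<Rightarrow> ('n::{finite,linorder}) \<Rightarrow> real" where
  "gram_inv K = (THE N. (\<forall>a b. (a \<notin> K \<or> b \<notin> K) \<longrightarrow> N a b = 0) \<and>
      (\<forall>a\<in>K. \<forall>c\<in>K. (\<Sum>b\<in>K. gram K a b * N b c) = (if a = c then 1 else 0)) \<and>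
      (\<forall>a\<in>K. \<forall>c\<in>K. (\<Sum>b\<in>K. N a b * gram K b c) = (if a = c then 1 else 0)))"

text \<open>I_n - B_K^T (B_K B_K^T)^{-1} B_K.\<close>
definition Qmat :: "('n::{finite,linorder}) set \<Rightarrow> real^('n::{finite,linorder})^('n::{finite,linorder})" where
  "Qmat K = mat 1 - (\<chi> i j. \<Sum>a\<in>K. \<Sum>b\<in>K. brow a $ i * gram_inv K a b * brow b $ j)"

definition QD :: "real^('n::{finite,linorder}) \<Rightarrow> (real^('n::{finite,linorder})^('n::{finite,linorder})) set" where
  "QD v = Qmat ` KD v"

definition is_perm_mat :: "real^('n::finite)^('n::finite) \<Rightarrow> bool" where
  "is_perm_mat P \<longleftrightarrow> (\<exists>\<sigma>. \<sigma> permutes (UNIV::'n set) \<and> P = (\<chi> i j. if \<sigma> i = j then 1 else 0))"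

definition nonincreasing :: "real^('n::{finite,linorder}) \<Rightarrow> bool" where
  "nonincreasing x \<longleftrightarrow> (\<forall>i j. i \<le> j \<longrightarrow> x$j \<le> x$i)"

text \<open>Psel is the fixed choice y \<mapsto> P_y.\<close>
definition QS :: "(real^('n::{finite,linorder}) \<Rightarrow> real^('n::{finite,linorder})^('n::{finite,linorder})) \<Rightarrow> real \<Rightarrow> real^('n::{finite,linorder}) \<Rightarrow> (real^('n::{finite,linorder})^('n::{finite,linorder})) set" where
  "QS Psel \<rho> y = {transpose (Psel y) ** Qh ** Psel y | Qh. Qh \<in> QD (Psel y *v y - \<rho> *\<^sub>R wvec)}"

definition diag_mat :: "(('n::finite) \<Rightarrow> real) \<Rightarrow> real^'n^'n" where
  "diag_mat q = (\<chi> i j. if i = j then q i else 0)"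

definition dB_prox_l1 :: "real \<Rightarrow> real^('n::finite) \<Rightarrow> (real^'n^'n) set" where
  "dB_prox_l1 \<beta> \<eta> = {diag_mat q | q. \<forall>i.
      (\<bar>\<eta>$i\<bar> < \<beta> \<longrightarrow> q i = 0) \<and> (\<bar>\<eta>$i\<bar> = \<beta> \<longrightarrow> q i \<in> {0,1}) \<and> (\<bar>\<eta>$i\<bar> > \<beta> \<longrightarrow> q i = 1)}"

definition Mset :: "(real^('n::{finite,linorder}) \<Rightarrow> real^('n::{finite,linorder})^('n::{finite,linorder})) \<Rightarrow> real \<Rightarrow> real \<Rightarrow> real^('n::{finite,linorder}) \<Rightarrow> (real^('n::{finite,linorder})^('n::{finite,linorder})) set" where
  "Mset Psel \<beta> \<rho> y = {M. transpose M = M \<and> (\<exists>\<Theta> Q. M = \<Theta> ** Q \<and>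
      \<Theta> \<in> dB_prox_l1 \<beta> (prox (pen_clust \<rho>) y) \<and> Q \<in> QS Psel \<rho> y)}"

definition dir_differentiable :: "(real^('n::finite) \<Rightarrow> real^'n) \<Rightarrow> real^'n \<Rightarrow> bool" where
  "dir_differentiable F x \<longleftrightarrow>
     (\<forall>d. \<exists>L. ((\<lambda>t. (1 / t) *\<^sub>R (F (x + t *\<^sub>R d) - F x)) \<longlongrightarrow> L) (at_right 0))"

end

theory Submission
  imports Defs
begin


definition obj :: "(real^'n \<Rightarrow> real) \<Rightarrow> real^'n \<Rightarrow> real^'n \<Rightarrow> real" where
  "obj f y x = (1/2) * (norm (x - y))^2 + f x"

definition cvx :: "(real^'n \<Rightarrow> real) \<Rightarrow> bool" where
  "cvx f \<longleftrightarrow> (\<forall>a b t. 0 \<le> t \<longrightarrow> t \<le> 1 \<longrightarrow> f ((1-t) *\<^sub>R a + t *\<^sub>R b) \<le> (1-t) * f a + t * f b)"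

lemma norm_add_scale_sq:
  fixes a b :: "real^'n"
  shows "(norm (a + t *\<^sub>R b))^2 = (norm a)^2 + 2*t*inner a b + t^2 * (norm b)^2"
  unfolding power2_norm_eq_inner by (simp add: inner_add_left inner_add_right inner_commute algebra_simps power2_eq_square)

lemma min_VI:
  assumes c: "cvx f" and m: "\<forall>z. obj f y x \<le> obj f y z"
  shows "inner (y - x) (z - x) \<le> f z - f x"
proof (rule ccontr)
  assume nt: "\<not> inner (y - x) (z - x) \<le> f z - f x"
  define \<delta> where "\<delta> = inner (y - x) (z - x) - (f z - f x)"
  define N where "N = (norm (z - x))^2"
  have dp: "\<delta> > 0" using nt unfolding \<delta>_def by simp
  have N0: "N \<ge> 0" unfolding N_def by simp
  have key: "\<delta> \<le> t * N / 2" if t: "0 < t" "t \<le> 1" for t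
  proof -
    have o1: "obj f y x \<le> obj f y ((1-t) *\<^sub>R x + t *\<^sub>R z)" using m by blast
    have e: "(1-t) *\<^sub>R x + t *\<^sub>R z - y = (x - y) + t *\<^sub>R (z - x)" by (simp add: algebra_simps)
    have fc: "f ((1-t) *\<^sub>R x + t *\<^sub>R z) \<le> (1-t) * f x + t * f z" using c t unfolding cvx_def by auto
    have nq: "(norm ((1-t) *\<^sub>R x + t *\<^sub>R z - y))^2 = (norm (x-y))^2 + 2*t*inner (x-y) (z-x) + t^2*N"
      unfolding e norm_add_scale_sq N_def by simp
    have "(1/2)*(norm (x-y))^2 + f x \<le> (1/2)*((norm (x-y))^2 + 2*t*inner (x-y) (z-x) + t^2*N) + ((1-t) * f x + t * f z)"
      using o1 fc nq unfolding obj_def by (simp add: algebra_simps)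
    hence "0 \<le> t * (inner (x-y) (z-x) + f z - f x) + t^2 * N / 2" by (simp add: algebra_simps)
    moreover have "inner (x-y) (z-x) = - inner (y - x) (z - x)" by (simp add: inner_diff_left)
    ultimately have "0 \<le> t * (- \<delta>) + t^2 * N / 2" unfolding \<delta>_def by (simp add: algebra_simps)
    hence "t * \<delta> \<le> t * (t * N / 2)" by (simp add: power2_eq_square algebra_simps)
    thus ?thesis using t by simp
  qed
  show False
  proof (cases "\<delta> \<ge> N + 1")
    case True
    have "\<delta> \<le> N/2" using key[of 1] by simp
    thus False using True N0 by simp
  next
    case False
    define t where "t = \<delta> / (N + 1)"
    have t0: "0 < t" "t \<le> 1" using False dp N0 unfolding t_def by auto
    have "\<delta> \<le> t * N / 2" using key[OF t0] .
    also have "\<dots> = \<delta> * (N / (2*(N+1)))" unfolding t_def using N0 by (simp add: field_simps)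
    also have "\<dots> < \<delta> * 1" using dp N0 by (intro mult_strict_left_mono) (auto simp: field_simps)
    finally show False by simp
  qed
qed

lemma min_nonexp:
  assumes c: "cvx f" and m1: "\<forall>z. obj f y1 x1 \<le> obj f y1 z" and m2: "\<forall>z. obj f y2 x2 \<le> obj f y2 z"
  shows "norm (x1 - x2) \<le> norm (y1 - y2)"
proof -
  have a: "inner (y1 - x1) (x2 - x1) \<le> f x2 - f x1" using min_VI[OF c m1] .
  have b: "inner (y2 - x2) (x1 - x2) \<le> f x1 - f x2" using min_VI[OF c m2] .
  have "(norm (x1 - x2))^2 \<le> inner (y1 - y2) (x1 - x2)"
    using a b by (simp add: power2_norm_eq_inner inner_diff_left inner_diff_right inner_commute algebra_simps)
  also have "\<dots> \<le> norm (y1 - y2) * norm (x1 - x2)" by (rule norm_cauchy_schwarz)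
  finally have "norm (x1 - x2) * norm (x1 - x2) \<le> norm (y1 - y2) * norm (x1 - x2)" by (simp add: power2_eq_square)
  thus ?thesis by (cases "norm (x1 - x2) = 0") auto
qed

lemma min_unique:
  assumes c: "cvx f" and m1: "\<forall>z. obj f y x1 \<le> obj f y z" and m2: "\<forall>z. obj f y x2 \<le> obj f y z"
  shows "x1 = x2"
  using min_nonexp[OF c m1 m2] by simp

lemma prox_eqI:
  assumes c: "cvx f" and m: "\<forall>z. obj f y x \<le> obj f y z"
  shows "prox f y = x"
  unfolding prox_def
proof (rule the_equality)
  show "\<forall>z. 1 / 2 * (norm (x - y))\<^sup>2 + f x \<le> 1 / 2 * (norm (z - y))\<^sup>2 + f z" using m unfolding obj_def .
next
  fix x' assume "\<forall>z. 1 / 2 * (norm (x' - y))\<^sup>2 + f x' \<le> 1 / 2 * (norm (z - y))\<^sup>2 + f z"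
  hence "\<forall>z. obj f y x' \<le> obj f y z" unfolding obj_def .
  thus "x' = x" using min_unique[OF c _ m] by blast
qed

lemma min_exists:
  fixes f :: "real^'n \<Rightarrow> real"
  assumes cont: "continuous_on UNIV f" and pos: "\<forall>x. f x \<ge> 0"
  shows "\<exists>x. \<forall>z. obj f y x \<le> obj f y z"
proof -
  define R where "R = sqrt (2 * obj f y y) + 1"
  have co: "continuous_on (cball y R) (obj f y)" unfolding obj_def
    by (intro continuous_intros continuous_on_subset[OF cont]) auto
  have R0: "R \<ge> 0" proof -
    have "0 \<le> obj f y y" using pos by (simp add: obj_def)
    thus "R \<ge> 0" unfolding R_def by simp
  qed
  hence "cball y R \<noteq> {}" by simp
  then obtain x where x: "x \<in> cball y R" "\<forall>z\<in>cball y R. obj f y x \<le> obj f y z"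
    using continuous_attains_inf[OF compact_cball _ co] by blast
  have "obj f y x \<le> obj f y z" for z
  proof (cases "z \<in> cball y R")
    case True thus ?thesis using x by blast
  next
    case False
    hence d: "norm (z - y) > R" by (simp add: dist_norm norm_minus_commute)
    have oy: "obj f y y \<ge> 0" using pos by (simp add: obj_def)
    have "sqrt (2 * obj f y y) < norm (z - y)" using d unfolding R_def by simp
    hence "(sqrt (2 * obj f y y))^2 < (norm (z - y))^2"
      using oy by (intro power_strict_mono) auto
    hence "2 * obj f y y < (norm (z-y))^2" using oy by simp
    hence "obj f y y \<le> obj f y z" using pos[rule_format, of z] unfolding obj_def by simp
    moreover have "obj f y x \<le> obj f y y" using x R0 by simp
    ultimately show ?thesis by simp
  qed
  thus ?thesis by blast
qed



definition pvec :: "('n \<Rightarrow> 'n) \<Rightarrow> real^'n \<Rightarrow> real^'n" where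
  "pvec \<sigma> x = (\<chi> i. x $ (\<sigma> i))"

lemma pvec_nth[simp]: "pvec \<sigma> x $ i = x $ (\<sigma> i)" by (simp add: pvec_def)

lemma pvec_diff: "pvec \<sigma> (x - y) = pvec \<sigma> x - pvec \<sigma> y"
  by (simp add: vec_eq_iff)

lemma pvec_inv: "\<sigma> permutes UNIV \<Longrightarrow> pvec (inv \<sigma>) (pvec \<sigma> x) = x"
  by (simp add: vec_eq_iff permutes_inverses)

lemma pvec_inv2: "\<sigma> permutes UNIV \<Longrightarrow> pvec \<sigma> (pvec (inv \<sigma>) x) = x"
  by (simp add: vec_eq_iff permutes_inverses)

lemma sum_perm: "\<sigma> permutes (UNIV::'n::finite set) \<Longrightarrow> (\<Sum>i\<in>UNIV. g (\<sigma> i)) = (\<Sum>i\<in>UNIV. g i)"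
  using sum.permute[of \<sigma> UNIV g] by (simp add: o_def)

lemma inner_pvec: "\<sigma> permutes UNIV \<Longrightarrow> inner (pvec \<sigma> x) (pvec \<sigma> y) = inner x y"
  unfolding inner_vec_def using sum_perm[of \<sigma> "\<lambda>i. inner (x$i) (y$i)"] by simp

lemma norm_pvec: "\<sigma> permutes UNIV \<Longrightarrow> norm (pvec \<sigma> x) = norm x"
  by (simp add: norm_eq_sqrt_inner inner_pvec)

definition l1 :: "real^'n \<Rightarrow> real" where "l1 x = (\<Sum>i\<in>UNIV. \<bar>x$i\<bar>)"
definition DS :: "real^'n \<Rightarrow> real" where "DS x = (\<Sum>i\<in>UNIV. \<Sum>j\<in>UNIV. \<bar>x$i - x$j\<bar>)"

lemma l1_pvec: "\<sigma> permutes UNIV \<Longrightarrow> l1 (pvec \<sigma> x) = l1 x"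
  unfolding l1_def using sum_perm[of \<sigma> "\<lambda>i. \<bar>x$i\<bar>"] by simp

lemma DS_pvec: "\<sigma> permutes UNIV \<Longrightarrow> DS (pvec \<sigma> x) = DS x"
proof -
  assume p: "\<sigma> permutes UNIV"
  have "DS (pvec \<sigma> x) = (\<Sum>i\<in>UNIV. \<Sum>j\<in>UNIV. \<bar>x$(\<sigma> i) - x$j\<bar>)"
    unfolding DS_def using sum_perm[OF p, of "\<lambda>j. \<bar>x$(\<sigma> _) - x$j\<bar>"] by simp
  also have "\<dots> = DS x" unfolding DS_def using sum_perm[OF p, of "\<lambda>i. \<Sum>j\<in>UNIV. \<bar>x$i - x$j\<bar>"] by simp
  finally show ?thesis .
qed

lemma pair_sum_sym:
  fixes g :: "'n::{finite,linorder} \<Rightarrow> 'n \<Rightarrow> real"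
  assumes sym: "\<And>i j. g i j = g j i" and diag: "\<And>i. g i i = 0"
  shows "(\<Sum>(i,j)\<in>{(i,j). i < j}. g i j) = (\<Sum>i\<in>UNIV. \<Sum>j\<in>UNIV. g i j) / 2"
proof -
  let ?A = "{(i::'n,j). i < j}" and ?B = "{(i::'n,j). j < i}" and ?C = "{(i::'n,j). i = j}"
  have U: "(UNIV :: ('n\<times>'n) set) = ?A \<union> ?B \<union> ?C" by auto
  have "(\<Sum>i\<in>UNIV. \<Sum>j\<in>UNIV. g i j) = (\<Sum>(i,j)\<in>UNIV. g i j)"
    by (simp add: sum.cartesian_product)
  also have "\<dots> = (\<Sum>(i,j)\<in>?A. g i j) + (\<Sum>(i,j)\<in>?B. g i j) + (\<Sum>(i,j)\<in>?C. g i j)"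
  proof -
    have 1: "(\<Sum>(i,j)\<in>?A \<union> ?B \<union> ?C. g i j) = (\<Sum>(i,j)\<in>?A \<union> ?B. g i j) + (\<Sum>(i,j)\<in>?C. g i j)"
      by (rule sum.union_disjoint) auto
    have 2: "(\<Sum>(i,j)\<in>?A \<union> ?B. g i j) = (\<Sum>(i,j)\<in>?A. g i j) + (\<Sum>(i,j)\<in>?B. g i j)"
      by (rule sum.union_disjoint) auto
    show ?thesis unfolding U 1 2 ..
  qed
  also have "(\<Sum>(i,j)\<in>?C. g i j) = 0" by (rule sum.neutral) (auto simp: diag)
  also have "(\<Sum>(i,j)\<in>?B. g i j) = (\<Sum>(i,j)\<in>?A. g i j)"
  proof -
    have "?B = prod.swap ` ?A" by auto
    hence "(\<Sum>(i,j)\<in>?B. g i j) = (\<Sum>p\<in>?A. (\<lambda>(i,j). g i j) (prod.swap p))"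
      by (simp add: sum.reindex)
    also have "\<dots> = (\<Sum>(i,j)\<in>?A. g i j)" by (intro sum.cong) (auto simp: sym)
    finally show ?thesis .
  qed
  finally show ?thesis by simp
qed

lemma PS_DS: "(\<Sum>(i,j)\<in>{(i,j). i < j}. \<bar>x$i - x$j\<bar>) = DS (x::real^('n::{finite,linorder})) / 2"
  unfolding DS_def by (rule pair_sum_sym) auto

lemma pen_p_alt: "pen_p \<beta> \<rho> x = \<beta> * l1 x + \<rho> * (DS x / 2)"
  unfolding pen_p_def l1_def PS_DS ..

lemma pen_p_pvec: "\<sigma> permutes UNIV \<Longrightarrow> pen_p \<beta> \<rho> (pvec \<sigma> x) = pen_p \<beta> \<rho> x"
  by (simp add: pen_p_alt l1_pvec DS_pvec)

lemma pen_clust_eq: "pen_clust \<rho> = pen_p 0 \<rho>"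
  by (rule ext) (simp add: pen_clust_def pen_p_def)

lemma abs_convex_comb: "0 \<le> (t::real) \<Longrightarrow> t \<le> 1 \<Longrightarrow> \<bar>(1-t)*a + t*b\<bar> \<le> (1-t)*\<bar>a\<bar> + t*\<bar>b\<bar>"
proof -
  assume t: "0 \<le> t" "t \<le> 1"
  have "\<bar>(1-t)*a + t*b\<bar> \<le> \<bar>(1-t)*a\<bar> + \<bar>t*b\<bar>" by (metis abs_triangle_ineq)
  also have "\<dots> = (1-t)*\<bar>a\<bar> + t*\<bar>b\<bar>" using t by (simp add: abs_mult)
  finally show ?thesis .
qed

lemma cvx_pen_p: assumes "\<beta> \<ge> 0" "\<rho> \<ge> 0" shows "cvx (pen_p \<beta> \<rho>)"
  unfolding cvx_def
proof (intro allI impI)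
  fix a b :: "real^'n::{finite,linorder}" and t :: real
  assume t: "0 \<le> t" "t \<le> 1"
  have l: "l1 ((1-t) *\<^sub>R a + t *\<^sub>R b) \<le> (1-t) * l1 a + t * l1 b"
    unfolding l1_def sum_distrib_left sum.distrib[symmetric]
    by (rule sum_mono) (simp add: abs_convex_comb t)
  have d: "DS ((1-t) *\<^sub>R a + t *\<^sub>R b) \<le> (1-t) * DS a + t * DS b"
    unfolding DS_def sum_distrib_left sum.distrib[symmetric]
  proof (intro sum_mono)
    fix i j
    have "\<bar>((1-t)*a$i + t*b$i) - ((1-t)*a$j + t*b$j)\<bar> = \<bar>(1-t)*(a$i - a$j) + t*(b$i - b$j)\<bar>"
      by (simp add: algebra_simps)
    also have "\<dots> \<le> (1-t)*\<bar>a$i - a$j\<bar> + t*\<bar>b$i - b$j\<bar>" by (rule abs_convex_comb[OF t])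
    finally show "\<bar>((1 - t) *\<^sub>R a + t *\<^sub>R b) $ i - ((1 - t) *\<^sub>R a + t *\<^sub>R b) $ j\<bar>
         \<le> (1 - t) * \<bar>a $ i - a $ j\<bar> + t * \<bar>b $ i - b $ j\<bar>" by simp
  qed
  show "pen_p \<beta> \<rho> ((1 - t) *\<^sub>R a + t *\<^sub>R b) \<le> (1 - t) * pen_p \<beta> \<rho> a + t * pen_p \<beta> \<rho> b"
  proof -
    have A1: "\<beta> * l1 ((1 - t) *\<^sub>R a + t *\<^sub>R b) \<le> \<beta> * ((1-t) * l1 a + t * l1 b)"
      using mult_left_mono[OF l assms(1)] .
    have A2: "\<rho> * DS ((1 - t) *\<^sub>R a + t *\<^sub>R b) \<le> \<rho> * ((1-t) * DS a + t * DS b)"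
      using mult_left_mono[OF d assms(2)] .
    have E: "(1 - t) * (\<beta> * l1 a + \<rho> * (DS a / 2)) + t * (\<beta> * l1 b + \<rho> * (DS b / 2))
       = \<beta> * ((1-t) * l1 a + t * l1 b) + (\<rho> * ((1-t) * DS a + t * DS b))/2"
      by (simp add: field_simps)
    show ?thesis unfolding pen_p_alt E using A1 A2 by linarith
  qed
qed

lemma pen_p_nonneg: "\<beta> \<ge> 0 \<Longrightarrow> \<rho> \<ge> 0 \<Longrightarrow> pen_p \<beta> \<rho> x \<ge> 0"
  unfolding pen_p_alt l1_def DS_def by (intro add_nonneg_nonneg mult_nonneg_nonneg sum_nonneg divide_nonneg_nonneg) auto

lemma pen_p_cont: "continuous_on UNIV (pen_p \<beta> \<rho>)"
  unfolding pen_p_alt l1_def DS_def by (intro continuous_intros) auto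

lemma pen_p_min:
  assumes "\<beta> \<ge> 0" "\<rho> \<ge> 0"
  shows "\<forall>z. obj (pen_p \<beta> \<rho>) y (prox (pen_p \<beta> \<rho>) y) \<le> obj (pen_p \<beta> \<rho>) y z"
proof -
  obtain x where x: "\<forall>z. obj (pen_p \<beta> \<rho>) y x \<le> obj (pen_p \<beta> \<rho>) y z"
    using min_exists[OF pen_p_cont] pen_p_nonneg[OF assms] by blast
  have "prox (pen_p \<beta> \<rho>) y = x" by (rule prox_eqI[OF cvx_pen_p[OF assms] x])
  thus ?thesis using x by simp
qed

lemma prox_lip:
  assumes "\<beta> \<ge> 0" "\<rho> \<ge> 0"
  shows "norm (prox (pen_p \<beta> \<rho>) y1 - prox (pen_p \<beta> \<rho>) y2) \<le> norm (y1 - y2)"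
  by (rule min_nonexp[OF cvx_pen_p[OF assms] pen_p_min[OF assms] pen_p_min[OF assms]])

lemma prox_cont:
  assumes "\<beta> \<ge> 0" "\<rho> \<ge> 0"
  shows "continuous_on UNIV (prox (pen_p \<beta> \<rho>))"
  unfolding continuous_on_iff
proof (intro ballI allI impI)
  fix x :: "real^('n::{finite,linorder})" and e :: real assume e: "e > 0"
  show "\<exists>d>0. \<forall>x'\<in>UNIV. dist x' x < d \<longrightarrow> dist (prox (pen_p \<beta> \<rho>) x') (prox (pen_p \<beta> \<rho>) x) < e"
  proof (intro exI[of _ e] conjI ballI impI e)
    fix x' assume "dist x' x < e"
    thus "dist (prox (pen_p \<beta> \<rho>) x') (prox (pen_p \<beta> \<rho>) x) < e"
      using prox_lip[OF assms, of x' x] unfolding dist_norm by linarith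
  qed
qed

lemma min_order:
  fixes x y :: "real^('a::{finite,linorder})" and a b :: 'a
  assumes b: "\<beta> \<ge> 0" and r: "\<rho> \<ge> 0"
    and m: "\<forall>z. obj (pen_p \<beta> \<rho>) y x \<le> obj (pen_p \<beta> \<rho>) y z"
    and yab: "y$b \<le> y$a"
  shows "x$b \<le> x$a"
proof (rule ccontr)
  assume "\<not> x$b \<le> x$a"
  hence xab: "x$a < x$b" by simp
  define \<tau> where "\<tau> = Transposition.transpose a b"
  have p: "\<tau> permutes UNIV" unfolding \<tau>_def by (rule permutes_swap_id) auto
  define x' where "x' = pvec \<tau> x"
  have pe: "pen_p \<beta> \<rho> x' = pen_p \<beta> \<rho> x" unfolding x'_def by (rule pen_p_pvec[OF p])
  have ab: "a \<noteq> b" using xab by auto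
  have nrm: "(norm (x' - y))^2 - (norm (x - y))^2 = 2 * (x$a - x$b) * (y$a - y$b)"
  proof -
    have sq: "(norm v)^2 = (\<Sum>i\<in>UNIV. (v$i)^2)" for v :: "real^('a::{finite,linorder})"
      unfolding power2_norm_eq_inner inner_vec_def by (simp add: power2_eq_square)
    have split: "(\<Sum>i\<in>UNIV. g i) = g a + g b + (\<Sum>i\<in>UNIV-{a,b}. g i)" for g :: "'a \<Rightarrow> real"
    proof -
      have "(\<Sum>i\<in>UNIV. g i) = (\<Sum>i\<in>{a,b}. g i) + (\<Sum>i\<in>UNIV-{a,b}. g i)"
        by (subst sum.union_disjoint[symmetric]) (auto intro: sum.cong)
      thus ?thesis using ab by simp
    qed
    have rest: "(\<Sum>i\<in>UNIV-{a,b}. (x'$i - y$i)^2) = (\<Sum>i\<in>UNIV-{a,b}. (x$i - y$i)^2)"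
      by (intro sum.cong) (auto simp: x'_def \<tau>_def)
    have "(norm (x' - y))^2 - (norm (x - y))^2 = (x$b - y$a)^2 + (x$a - y$b)^2 - (x$a - y$a)^2 - (x$b - y$b)^2"
      unfolding sq split[of "\<lambda>i. ((x' - y)$i)^2"] split[of "\<lambda>i. ((x - y)$i)^2"]
      using rest ab by (simp add: x'_def \<tau>_def)
    also have "\<dots> = 2 * (x$a - x$b) * (y$a - y$b)" by (simp add: power2_eq_square algebra_simps)
    finally show ?thesis .
  qed
  have "(x$a - x$b) * (y$a - y$b) \<le> 0"
    using xab yab by (intro mult_nonpos_nonneg) auto
  hence "2 * (x$a - x$b) * (y$a - y$b) \<le> 0" by (simp only: mult.assoc)
  hence "obj (pen_p \<beta> \<rho>) y x' \<le> obj (pen_p \<beta> \<rho>) y x" unfolding obj_def using nrm pe by linarith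
  hence m': "\<forall>z. obj (pen_p \<beta> \<rho>) y x' \<le> obj (pen_p \<beta> \<rho>) y z" using m by (meson order_trans)
  have "x' = x" by (rule min_unique[OF cvx_pen_p[OF b r] m' m])
  hence "x'$a = x$a" by simp
  thus False using xab unfolding x'_def \<tau>_def by simp
qed



definition Tsc :: "real \<Rightarrow> real \<Rightarrow> real" where
  "Tsc \<beta> a = sgn a * max (\<bar>a\<bar> - \<beta>) 0"

definition Tv :: "real \<Rightarrow> real^'n \<Rightarrow> real^'n" where
  "Tv \<beta> x = (\<chi> i. Tsc \<beta> (x$i))"

lemma Tv_nth[simp]: "Tv \<beta> x $ i = Tsc \<beta> (x$i)" by (simp add: Tv_def)

lemma Tsc_mono: "\<beta> \<ge> 0 \<Longrightarrow> a \<le> b \<Longrightarrow> Tsc \<beta> a \<le> Tsc \<beta> b"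
  unfolding Tsc_def by (auto simp: sgn_if max_def)

lemma Tsc_lip: "\<beta> \<ge> 0 \<Longrightarrow> a \<le> b \<Longrightarrow> Tsc \<beta> b - Tsc \<beta> a \<le> b - a"
  unfolding Tsc_def by (auto simp: sgn_if max_def)

lemma Tsc_sub: assumes b: "\<beta> \<ge> 0" shows "(a - Tsc \<beta> a) * (z - Tsc \<beta> a) \<le> \<beta> * (\<bar>z\<bar> - \<bar>Tsc \<beta> a\<bar>)"
proof -
  consider "a > \<beta>" | "a < -\<beta>" | "\<bar>a\<bar> \<le> \<beta>" by linarith
  thus ?thesis
  proof cases
    case 1
    hence t: "Tsc \<beta> a = a - \<beta>" using b unfolding Tsc_def by (auto simp: sgn_if max_def)
    have "\<beta> * z \<le> \<beta> * \<bar>z\<bar>" using b by (intro mult_left_mono) auto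
    thus ?thesis unfolding t using 1 b by (simp add: algebra_simps)
  next
    case 2
    hence t: "Tsc \<beta> a = a + \<beta>" using b unfolding Tsc_def by (auto simp: sgn_if max_def)
    have "\<beta> * (-z) \<le> \<beta> * \<bar>z\<bar>" using b by (intro mult_left_mono) auto
    thus ?thesis unfolding t using 2 b by (simp add: algebra_simps)
  next
    case 3
    hence t: "Tsc \<beta> a = 0" unfolding Tsc_def by (auto simp: sgn_if max_def)
    have "a * z \<le> \<bar>a\<bar> * \<bar>z\<bar>" by (metis abs_ge_self abs_mult)
    also have "\<dots> \<le> \<beta> * \<bar>z\<bar>" using 3 by (intro mult_right_mono) auto
    finally show ?thesis unfolding t by simp
  qed
qed

lemma Tsc_0: "Tsc 0 a = a" unfolding Tsc_def by (auto simp: sgn_if)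

lemma Tv_0: "Tv 0 x = x" by (simp add: vec_eq_iff Tsc_0)

lemma Tv_pvec: "Tv \<beta> (pvec \<sigma> x) = pvec \<sigma> (Tv \<beta> x)" by (simp add: vec_eq_iff)

lemma Dset_iff: "x \<in> Dset \<longleftrightarrow> (\<forall>i j. i \<le> j \<longrightarrow> x$j \<le> x$i)" by (simp add: Dset_def)

lemma closed_Dset: "closed (Dset :: (real^('n::{finite,linorder})) set)"
proof -
  have "Dset = (\<Inter>i. \<Inter>j. {x::real^('n::{finite,linorder}). i \<le> j \<longrightarrow> x$j \<le> x$i})" by (auto simp: Dset_def)
  moreover have c: "closed {x::real^('n::{finite,linorder}). i \<le> j \<longrightarrow> x$j \<le> x$i}" for i j
    by (cases "i \<le> j") (auto intro!: closed_Collect_le linear_continuous_on bounded_linear_vec_nth)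
  have "closed (\<Inter>i. \<Inter>j. {x::real^('n::{finite,linorder}). i \<le> j \<longrightarrow> x$j \<le> x$i})"
    by (intro closed_INT ballI c)
  ultimately show ?thesis by simp
qed

lemma convex_Dset: "convex (Dset :: (real^('n::{finite,linorder})) set)"
  unfolding convex_def Dset_def by (auto intro!: add_mono mult_left_mono)

lemma Dset_ne: "(Dset :: (real^('n::{finite,linorder})) set) \<noteq> {}"
  using Dset_iff[of 0] by auto

lemma Dset_add: "x \<in> Dset \<Longrightarrow> y \<in> Dset \<Longrightarrow> x + y \<in> Dset"
  unfolding Dset_iff by (simp add: add_mono)

lemma Dset_Tv: "\<beta> \<ge> 0 \<Longrightarrow> x \<in> Dset \<Longrightarrow> Tv \<beta> x \<in> Dset"
  unfolding Dset_iff by (simp add: Tsc_mono)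

lemma Dset_minus_Tv: "\<beta> \<ge> 0 \<Longrightarrow> x \<in> Dset \<Longrightarrow> x - Tv \<beta> x \<in> Dset"
  unfolding Dset_iff using Tsc_lip by fastforce

lemma PiD_in: "PiD v \<in> Dset"
  unfolding PiD_def by (rule closest_point_in_set[OF closed_Dset Dset_ne])

lemma PiD_VI: "x \<in> Dset \<Longrightarrow> inner (v - PiD v) (x - PiD v) \<le> 0"
  unfolding PiD_def by (rule closest_point_dot[OF convex_Dset closed_Dset])

lemma card_gt: "card {j::'n::{finite,linorder}. i < j} = CARD('n) - 1 - rk i"
proof -
  have U: "(UNIV::'n set) = {j. j < i} \<union> {i} \<union> {j. i < j}" by auto
  have "card ({j. j < i} \<union> {i} \<union> {j. i < j}) = card ({j. j < i} \<union> {i}) + card {j. i < j}"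
    by (rule card_Un_disjoint) auto
  moreover have "card ({j. j < i} \<union> {i}) = card {j. j < i} + card {i}"
    by (rule card_Un_disjoint) auto
  ultimately have "CARD('n) = card {j. j < i} + 1 + card {j. i < j}" by (simp only: U[symmetric]) simp
  thus ?thesis unfolding rk_def by simp
qed

lemma sum_pairs_fst: fixes f :: "'n::{finite,linorder} \<Rightarrow> real"
  shows "(\<Sum>(i,j)\<in>{(i::'n,j). i < j}. f i) = (\<Sum>i\<in>UNIV. f i * real (card {j. i < j}))"
proof -
  have "{(i::'n,j). i < j} = Sigma UNIV (\<lambda>i. {j. i < j})" by auto
  moreover have "(\<Sum>i\<in>UNIV. \<Sum>j\<in>{j. i < j}. f i) = (\<Sum>(i,j)\<in>Sigma UNIV (\<lambda>i. {j. i < j}). f i)"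
    by (rule sum.Sigma) auto
  ultimately have "(\<Sum>(i,j)\<in>{(i::'n,j). i < j}. f i) = (\<Sum>i\<in>UNIV. \<Sum>j\<in>{j. i < j}. f i)"
    by simp
  thus ?thesis by (simp add: mult.commute)
qed

lemma sum_pairs_snd: fixes f :: "'n::{finite,linorder} \<Rightarrow> real"
  shows "(\<Sum>(i,j)\<in>{(i::'n,j). i < j}. f j) = (\<Sum>j\<in>UNIV. f j * real (rk j))"
proof -
  have "{(i::'n,j). i < j} = prod.swap ` Sigma UNIV (\<lambda>j. {i. i < j})" by auto
  hence "(\<Sum>(i,j)\<in>{(i::'n,j). i < j}. f j) = (\<Sum>p\<in>Sigma UNIV (\<lambda>j. {i. i < j}). (\<lambda>(i,j). f j) (prod.swap p))"
    by (simp add: sum.reindex)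
  also have "\<dots> = (\<Sum>(j,i)\<in>Sigma UNIV (\<lambda>j. {i. i < j}). f j)"
    by (simp add: split_beta)
  also have "\<dots> = (\<Sum>j\<in>UNIV. \<Sum>i\<in>{i. i < j}. f j)"
    by (rule sum.Sigma[symmetric]) auto
  finally show ?thesis by (simp add: rk_def mult.commute)
qed

lemma inner_wvec: "inner wvec (z::real^('n::{finite,linorder})) = (\<Sum>(i,j)\<in>{(i,j). i < j}. z$i - z$j)"
proof -
  have "(\<Sum>(i,j)\<in>{(i::'n,j). i < j}. z$i - z$j) = (\<Sum>(i,j)\<in>{(i::'n,j). i < j}. z$i) - (\<Sum>(i,j)\<in>{(i::'n,j). i < j}. z$j)"
    by (simp add: sum_subtractf split_beta)
  also have "\<dots> = (\<Sum>i\<in>UNIV. z$i * real (card {j. i < j})) - (\<Sum>j\<in>UNIV. z$j * real (rk j))"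
    using sum_pairs_fst[of "\<lambda>i. z$i"] sum_pairs_snd[of "\<lambda>j. z$j"] by simp
  also have "\<dots> = (\<Sum>i\<in>UNIV. z$i * (real (card {j. i < j}) - real (rk i)))"
    by (simp add: sum_subtractf algebra_simps)
  also have "\<dots> = inner wvec z"
  proof -
    have "rk i < CARD('n)" for i :: 'n
      unfolding rk_def by (rule psubset_card_mono) auto
    hence "Suc (rk i) \<le> CARD('n)" for i :: 'n by (simp add: Suc_leI)
    hence "real (card {j. i < j}) - real (rk i) = wvec $ i" for i :: 'n
      unfolding card_gt wvec_def by (simp add: of_nat_diff algebra_simps)
    thus ?thesis unfolding inner_vec_def by (simp add: mult.commute)
  qed
  finally show ?thesis by simp
qed

lemma DS_Dset: "z \<in> Dset \<Longrightarrow> DS (z::real^('n::{finite,linorder})) / 2 = inner wvec z"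
proof -
  assume z: "z \<in> Dset"
  have "DS z / 2 = (\<Sum>(i,j)\<in>{(i::'n,j). i < j}. \<bar>z$i - z$j\<bar>)" by (simp add: PS_DS)
  also have "\<dots> = (\<Sum>(i,j)\<in>{(i::'n,j). i < j}. z$i - z$j)"
    using z unfolding Dset_iff by (intro sum.cong) auto
  finally show ?thesis by (simp add: inner_wvec)
qed



lemma nsq_add: "(norm (a + b))^2 = (norm a)^2 + 2 * inner a b + (norm (b::real^'n))^2"
  using norm_add_scale_sq[of a 1 b] by simp

lemma quad_shift:
  fixes z a w :: "real^'n"
  shows "(1/2) * (norm (z - a))^2 + \<rho> * inner w z = (1/2) * (norm (z - (a - \<rho> *\<^sub>R w)))^2 + (\<rho> * inner w a - (1/2) * \<rho>^2 * (norm w)^2)"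
proof -
  have "z - a = (z - (a - \<rho> *\<^sub>R w)) + (- \<rho>) *\<^sub>R w" by (simp add: algebra_simps)
  hence "(norm (z - a))^2 = (norm (z - (a - \<rho> *\<^sub>R w)))^2 + 2 * (-\<rho>) * inner (z - (a - \<rho> *\<^sub>R w)) w + (-\<rho>)^2 * (norm w)^2"
    using norm_add_scale_sq[of "z - (a - \<rho> *\<^sub>R w)" "-\<rho>" w] by simp
  moreover have "inner (z - (a - \<rho> *\<^sub>R w)) w = inner z w - inner a w + \<rho> * inner w w"
    by (simp add: inner_diff_left)
  moreover have "inner z w = inner w z" "inner a w = inner w a" "inner w w = (norm w)^2"
    by (simp_all add: inner_commute power2_norm_eq_inner)
  ultimately show ?thesis by (simp add: algebra_simps power2_eq_square)
qed

lemma l1_def2: "l1 x = (\<Sum>i\<in>UNIV. \<bar>x$i\<bar>)" by (simp add: l1_def)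

lemma key_ineq:
  fixes v z :: "real^('n::{finite,linorder})"
  assumes b: "\<beta> \<ge> 0" and zD: "z \<in> Dset"
  defines "d \<equiv> PiD v" and "e \<equiv> Tv \<beta> (PiD v)"
  shows "(1/2) * (norm (e - v))^2 + \<beta> * l1 e + (1/2) * (norm (z - e))^2 \<le> (1/2) * (norm (z - v))^2 + \<beta> * l1 z"
proof -
  have dD: "d \<in> Dset" unfolding d_def by (rule PiD_in)
  have "inner (v - d) ((d + z) - d) \<le> 0" unfolding d_def by (rule PiD_VI[OF Dset_add[OF PiD_in zD]])
  hence i1: "inner (v - d) z \<le> 0" by simp
  have "inner (v - d) ((d - e) - d) \<le> 0" unfolding d_def e_def by (rule PiD_VI[OF Dset_minus_Tv[OF b PiD_in]])
  hence i2: "inner (v - d) e \<ge> 0" by (simp add: inner_minus_right)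
  have i3: "inner (d - e) (z - e) \<le> \<beta> * (l1 z - l1 e)"
  proof -
    have "inner (d - e) (z - e) = (\<Sum>i\<in>UNIV. (d$i - Tsc \<beta> (d$i)) * (z$i - Tsc \<beta> (d$i)))"
      unfolding inner_vec_def e_def d_def by simp
    also have "\<dots> \<le> (\<Sum>i\<in>UNIV. \<beta> * (\<bar>z$i\<bar> - \<bar>Tsc \<beta> (d$i)\<bar>))"
      by (rule sum_mono) (rule Tsc_sub[OF b])
    also have "\<dots> = \<beta> * (l1 z - l1 e)"
      unfolding l1_def e_def d_def by (simp add: sum_distrib_left sum_subtractf right_diff_distrib)
    finally show ?thesis .
  qed
  have i4: "inner (v - e) (z - e) \<le> \<beta> * (l1 z - l1 e)"
  proof -
    have "inner (v - e) (z - e) = inner (v - d) z - inner (v - d) e + inner (d - e) (z - e)"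
      by (simp add: inner_diff_left inner_diff_right algebra_simps)
    thus ?thesis using i1 i2 i3 by linarith
  qed
  have "z - v = (z - e) + (e - v)" by simp
  hence "(norm (z - v))^2 = (norm (z - e))^2 + 2 * inner (z - e) (e - v) + (norm (e - v))^2"
    using nsq_add[of "z - e" "e - v"] by simp
  moreover have "inner (z - e) (e - v) = - inner (v - e) (z - e)"
    by (simp add: inner_commute inner_diff_right inner_diff_left)
  ultimately show ?thesis using i4 by (simp add: algebra_simps)
qed

lemma prox_formula:
  fixes y :: "real^('n::{finite,linorder})"
  assumes b: "\<beta> \<ge> 0" and r: "\<rho> \<ge> 0" and p: "\<sigma> permutes UNIV"
    and ni: "nonincreasing (pvec \<sigma> y)"
  shows "prox (pen_p \<beta> \<rho>) y = pvec (inv \<sigma>) (Tv \<beta> (PiD (pvec \<sigma> y - \<rho> *\<^sub>R wvec)))"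
proof -
  define xs where "xs = prox (pen_p \<beta> \<rho>) y"
  have m: "\<forall>z. obj (pen_p \<beta> \<rho>) y xs \<le> obj (pen_p \<beta> \<rho>) y z" unfolding xs_def by (rule pen_p_min[OF b r])
  define v where "v = pvec \<sigma> y - \<rho> *\<^sub>R wvec"
  define e where "e = Tv \<beta> (PiD v)"
  define zs where "zs = pvec \<sigma> xs"
  have pi: "inv \<sigma> permutes UNIV" by (rule permutes_inv[OF p])
  have zD: "zs \<in> Dset" unfolding Dset_iff zs_def
  proof (intro allI impI)
    fix i j :: 'n assume "i \<le> j"
    hence "y $ (\<sigma> j) \<le> y $ (\<sigma> i)" using ni unfolding nonincreasing_def by simp
    hence "xs $ (\<sigma> j) \<le> xs $ (\<sigma> i)" by (rule min_order[OF b r m])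
    thus "pvec \<sigma> xs $ j \<le> pvec \<sigma> xs $ i" by simp
  qed
  have eD: "e \<in> Dset" unfolding e_def by (rule Dset_Tv[OF b PiD_in])
  define K where "K = \<rho> * inner wvec (pvec \<sigma> y) - (1/2) * \<rho>^2 * (norm (wvec::real^('n::{finite,linorder})))^2"
  have conv: "obj (pen_p \<beta> \<rho>) y (pvec (inv \<sigma>) z) = (1/2) * (norm (z - v))^2 + \<beta> * l1 z + K"
    if zD: "z \<in> Dset" for z
  proof -
    have n: "norm (pvec (inv \<sigma>) z - y) = norm (z - pvec \<sigma> y)"
    proof -
      have "norm (pvec (inv \<sigma>) z - y) = norm (pvec \<sigma> (pvec (inv \<sigma>) z - y))" by (simp add: norm_pvec[OF p])
      also have "\<dots> = norm (z - pvec \<sigma> y)" by (simp add: pvec_diff pvec_inv2[OF p])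
      finally show ?thesis .
    qed
    have pp: "pen_p \<beta> \<rho> (pvec (inv \<sigma>) z) = \<beta> * l1 z + \<rho> * inner wvec z"
      using pen_p_pvec[OF pi] DS_Dset[OF zD] by (simp add: pen_p_alt)
    show ?thesis unfolding obj_def n pp v_def K_def
      using quad_shift[of z "pvec \<sigma> y" \<rho> wvec] by simp
  qed
  have xs_eq: "xs = pvec (inv \<sigma>) zs" unfolding zs_def by (simp add: pvec_inv[OF p])
  have "obj (pen_p \<beta> \<rho>) y xs \<le> obj (pen_p \<beta> \<rho>) y (pvec (inv \<sigma>) e)" using m by blast
  hence "(1/2) * (norm (zs - v))^2 + \<beta> * l1 zs \<le> (1/2) * (norm (e - v))^2 + \<beta> * l1 e"
    unfolding xs_eq conv[OF zD] conv[OF eD] by simp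
  moreover have "(1/2) * (norm (e - v))^2 + \<beta> * l1 e + (1/2) * (norm (zs - e))^2 \<le> (1/2) * (norm (zs - v))^2 + \<beta> * l1 zs"
    unfolding e_def by (rule key_ineq[OF b zD])
  ultimately have "(norm (zs - e))^2 \<le> 0" by linarith
  hence "norm (zs - e) = 0" by (simp add: power2_eq_square mult_le_0_iff)
  hence "zs = e" by simp
  thus ?thesis unfolding xs_def[symmetric] xs_eq e_def v_def by simp
qed



lemma succ_gt: "i \<in> Brows \<Longrightarrow> i < succ_idx (i::'n::{finite,linorder})"
proof -
  assume "i \<in> Brows"
  hence "{j. i < j} \<noteq> {}" unfolding Brows_def by auto
  hence "Min {j. i < j} \<in> {j. i < j}" by (intro Min_in) auto
  thus ?thesis unfolding succ_idx_def by simp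
qed

lemma succ_le: "i < l \<Longrightarrow> succ_idx i \<le> (l::'n::{finite,linorder})"
  unfolding succ_idx_def by (rule Min_le) auto

lemma brow_nth: "brow i $ j = (if j = i then 1 else if j = succ_idx i then -1 else 0)"
  by (simp add: brow_def)

lemma inner_brow: "i \<in> Brows \<Longrightarrow> inner (brow i) x = x$i - x$(succ_idx (i::'n::{finite,linorder}))"
proof -
  assume i: "i \<in> Brows"
  have ne: "succ_idx i \<noteq> i" using succ_gt[OF i] by simp
  have "inner (brow i) x = (\<Sum>j\<in>UNIV. (if j = i then x$j else 0) + (if j = succ_idx i then - x$j else 0))"
    unfolding inner_vec_def brow_nth by (intro sum.cong) (auto simp: ne)
  also have "\<dots> = x$i - x$(succ_idx i)" by (simp add: sum.distrib)
  finally show ?thesis .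
qed

lemma Dset_brow: "x \<in> Dset \<Longrightarrow> i \<in> Brows \<Longrightarrow> inner (brow i) x \<ge> 0"
  using succ_gt[of i] by (simp add: inner_brow Dset_iff)

lemma full_row_rank_all:
  assumes K: "K \<subseteq> (Brows :: ('n::{finite,linorder}) set)"
  shows "full_row_rank K"
  unfolding full_row_rank_def
proof (intro conjI allI impI ballI K)
  fix c :: "'n \<Rightarrow> real" and i assume z: "(\<Sum>i\<in>K. c i *\<^sub>R brow i) = 0" and iK: "i \<in> K"
  show "c i = 0"
  proof (rule ccontr)
    assume ci: "c i \<noteq> 0"
    define S where "S = {i\<in>K. c i \<noteq> 0}"
    have Sne: "S \<noteq> {}" using ci iK unfolding S_def by auto
    define m where "m = Min S"
    have mS: "m \<in> S" unfolding m_def using Sne by (intro Min_in) auto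
    have mmin: "\<And>j. j \<in> S \<Longrightarrow> m \<le> j" unfolding m_def by (intro Min_le) auto
    have "0 = (\<Sum>j\<in>K. c j *\<^sub>R brow j) $ m" using z by simp
    also have "\<dots> = (\<Sum>j\<in>K. c j * brow j $ m)" by (simp add: sum_component)
    also have "\<dots> = (\<Sum>j\<in>K. if j = m then c j else 0)"
    proof (intro sum.cong refl)
      fix j assume jK: "j \<in> K"
      show "c j * brow j $ m = (if j = m then c j else 0)"
      proof (cases "j = m")
        case False
        show ?thesis
        proof (cases "m = succ_idx j")
          case True
          have "j < m" using succ_gt[of j] jK K True by auto
          hence "c j = 0" using mmin[of j] jK unfolding S_def by force
          thus ?thesis using False by simp
        next
          case False2: False
          thus ?thesis using False by (simp add: brow_nth)
        qed
      qed (simp add: brow_nth)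
    qed
    also have "\<dots> = c m" using mS unfolding S_def by simp
    finally show False using mS unfolding S_def by simp
  qed
qed



definition gspec :: "('n::{finite,linorder}) set \<Rightarrow> ('n \<Rightarrow> 'n \<Rightarrow> real) \<Rightarrow> bool" where
  "gspec K N \<longleftrightarrow> (\<forall>a b. (a \<notin> K \<or> b \<notin> K) \<longrightarrow> N a b = 0) \<and>
      (\<forall>a\<in>K. \<forall>c\<in>K. (\<Sum>b\<in>K. gram K a b * N b c) = (if a = c then 1 else 0)) \<and>
      (\<forall>a\<in>K. \<forall>c\<in>K. (\<Sum>b\<in>K. N a b * gram K b c) = (if a = c then 1 else 0))"

lemma gspec_unique:
  assumes "gspec K N1" "gspec K N2" shows "N1 = N2"
proof (intro ext)
  fix a c
  show "N1 a c = N2 a c"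
  proof (cases "a \<in> K \<and> c \<in> K")
    case False thus ?thesis using assms unfolding gspec_def by auto
  next
    case True
    hence aK: "a \<in> K" and cK: "c \<in> K" by auto
    have "N1 a c = (\<Sum>b\<in>K. N1 a b * (if b = c then 1 else 0))"
      using cK by (simp add: if_distrib sum.delta' cong: if_cong)
    also have "\<dots> = (\<Sum>b\<in>K. N1 a b * (\<Sum>e\<in>K. gram K b e * N2 e c))"
      using assms(2) cK unfolding gspec_def by (intro sum.cong) auto
    also have "\<dots> = (\<Sum>b\<in>K. \<Sum>e\<in>K. N1 a b * gram K b e * N2 e c)"
      by (simp add: sum_distrib_left mult.assoc)
    also have "\<dots> = (\<Sum>e\<in>K. \<Sum>b\<in>K. N1 a b * gram K b e * N2 e c)"
      by (rule sum.swap)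
    also have "\<dots> = (\<Sum>e\<in>K. (\<Sum>b\<in>K. N1 a b * gram K b e) * N2 e c)"
      by (simp add: sum_distrib_right)
    also have "\<dots> = (\<Sum>e\<in>K. (if a = e then 1 else 0) * N2 e c)"
      using assms(1) aK unfolding gspec_def by (intro sum.cong) auto
    also have "\<dots> = (\<Sum>e\<in>K. if a = e then N2 e c else 0)" by (rule sum.cong) auto
    also have "\<dots> = N2 a c" using aK by simp
    finally show ?thesis .
  qed
qed

lemma gspec_exists:
  fixes K :: "('n::{finite,linorder}) set"
  assumes fr: "full_row_rank K"
  shows "\<exists>N. gspec K N"
proof -
  define G where "G = (\<lambda>c::real^('n::{finite,linorder}). \<chi> a. if a \<in> K then (\<Sum>b\<in>K. gram K a b * c$b) else c$a)"
  have lin: "linear G"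
    unfolding G_def
    by (rule linearI) (simp_all add: vec_eq_iff sum.distrib distrib_left sum_distrib_left mult.left_commute)
  have inj: "inj G"
  proof (rule linear_injective_0[OF lin, THEN iffD2], intro allI impI)
    fix c :: "real^('n::{finite,linorder})" assume G0: "G c = 0"
    have off: "c$a = 0" if "a \<notin> K" for a using G0 that unfolding G_def by (simp add: vec_eq_iff) (metis)
    have on: "(\<Sum>b\<in>K. gram K a b * c$b) = 0" if "a \<in> K" for a
      using G0 that unfolding G_def by (simp add: vec_eq_iff) (metis)
    define w where "w = (\<Sum>b\<in>K. c$b *\<^sub>R brow b)"
    have "inner w w = (\<Sum>a\<in>K. c$a * (\<Sum>b\<in>K. gram K b a * c$b))"
      unfolding w_def gram_def by (simp add: inner_sum_left inner_sum_right sum_distrib_left algebra_simps)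
    also have "\<dots> = (\<Sum>a\<in>K. c$a * (\<Sum>b\<in>K. gram K a b * c$b))"
      unfolding gram_def by (simp add: inner_commute)
    also have "\<dots> = 0" using on by simp
    finally have "w = 0" by simp
    hence "\<forall>i\<in>K. c$i = 0" using fr unfolding full_row_rank_def w_def by blast
    thus "c = 0" using off by (auto simp: vec_eq_iff)
  qed
  obtain H where H: "linear H" "\<And>x. H (G x) = x" "\<And>x. G (H x) = x"
    using linear_injective_isomorphism[OF lin inj] by blast
  define N where "N = (\<lambda>a c. if a \<in> K \<and> c \<in> K then H (axis c 1) $ a else 0)"
  have s1: "\<forall>a b. (a \<notin> K \<or> b \<notin> K) \<longrightarrow> N a b = 0" unfolding N_def by auto
  have s2: "(\<Sum>b\<in>K. gram K a b * N b c) = (if a = c then 1 else 0)" if "a \<in> K" "c \<in> K" for a c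
  proof -
    have "(\<Sum>b\<in>K. gram K a b * N b c) = G (H (axis c 1)) $ a"
      unfolding N_def G_def using that by (simp add: cong: sum.cong)
    also have "\<dots> = (if a = c then 1 else 0)" by (simp add: H axis_def)
    finally show ?thesis .
  qed
  have s3: "(\<Sum>b\<in>K. N a b * gram K b c) = (if a = c then 1 else 0)" if "a \<in> K" "c \<in> K" for a c
  proof -
    have GE: "G (axis c 1) = (\<Sum>b\<in>K. gram K b c *\<^sub>R axis b 1)"
    proof (subst vec_eq_iff, intro allI)
      fix a'
      have r: "(\<Sum>b\<in>K. gram K b c *\<^sub>R axis b (1::real)) $ a' = (if a' \<in> K then gram K a' c else 0)"
      proof -
        have "(\<Sum>b\<in>K. gram K b c *\<^sub>R axis b (1::real)) $ a' = (\<Sum>b\<in>K. if b = a' then gram K b c else 0)"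
          unfolding sum_component by (intro sum.cong) (auto simp: axis_def)
        thus ?thesis by simp
      qed
      show "G (axis c 1) $ a' = (\<Sum>b\<in>K. gram K b c *\<^sub>R axis b 1) $ a'"
      proof (cases "a' \<in> K")
        case True
        have "G (axis c 1) $ a' = (\<Sum>b\<in>K. gram K a' b * axis c 1 $ b)"
          unfolding G_def using True by simp
        also have "\<dots> = (\<Sum>b\<in>K. if b = c then gram K a' b else 0)"
          by (intro sum.cong) (auto simp: axis_def)
        also have "\<dots> = gram K a' c" using that by simp
        finally show ?thesis using r True by simp
      next
        case False
        hence "a' \<noteq> c" using that by auto
        thus ?thesis unfolding G_def r using False by (simp add: axis_def)
      qed
    qed
    have "(\<Sum>b\<in>K. N a b * gram K b c) = (\<Sum>b\<in>K. gram K b c *\<^sub>R H (axis b 1)) $ a"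
      unfolding N_def using that by (simp add: sum_component mult.commute)
    also have "\<dots> = H (\<Sum>b\<in>K. gram K b c *\<^sub>R axis b 1) $ a"
      using H(1) by (simp add: linear_sum linear_scale)
    also have "\<dots> = (if a = c then 1 else 0)" unfolding GE[symmetric] H by (simp add: axis_def)
    finally show ?thesis .
  qed
  have "gspec K N" unfolding gspec_def using s1 s2 s3 by blast
  thus ?thesis by blast
qed

lemma gram_inv_spec:
  assumes "full_row_rank K" shows "gspec K (gram_inv K)"
proof -
  obtain N where N: "gspec K N" using gspec_exists[OF assms] by blast
  have "\<exists>!N. gspec K N" using N gspec_unique by blast
  hence "gspec K (THE N. gspec K N)" by (rule theI')
  moreover have "gram_inv K = (THE N. gspec K N)" unfolding gram_inv_def gspec_def ..
  ultimately show ?thesis by simp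
qed



lemma mv_nth: "(A *v x) $ i = (\<Sum>j\<in>UNIV. A$i$j * x$j)"
  by (simp add: matrix_vector_mult_def)

lemma mat_diff_mv: "(A - B) *v x = A *v x - B *v (x::real^'n)"
  by (simp add: vec_eq_iff mv_nth sum_subtractf left_diff_distrib)

lemma Qmat_proj:
  fixes v :: "real^('n::{finite,linorder})"
  assumes KD: "K \<in> KD v"
  shows "Qmat K *v v = PiD v"
proof -
  obtain lam where lam: "lam \<in> MD v" and supp: "{i. lam i \<noteq> 0} \<subseteq> K" and KI: "K \<subseteq> ID v"
    and fr: "full_row_rank K"
    using KD unfolding KD_def by blast
  define d where "d = PiD v"
  have KB: "K \<subseteq> Brows" using KI unfolding ID_def by auto
  have lamK: "lam c = 0" if "c \<notin> K" for c using supp that by auto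
  have eq: "d - v + BT lam = 0" using lam unfolding MD_def d_def by simp
  have BTK: "BT lam = (\<Sum>i\<in>K. lam i *\<^sub>R brow i)"
    unfolding BT_def by (rule sum.mono_neutral_right) (auto simp: KB lamK)
  have vdec: "v = d + BT lam" using eq by (simp add: algebra_simps)
  have bd: "inner (brow b) d = 0" if "b \<in> K" for b using KI that unfolding ID_def d_def by auto
  have ibv: "inner (brow b) v = (\<Sum>c\<in>K. lam c * gram K b c)" if "b \<in> K" for b
  proof -
    have "inner (brow b) v = inner (brow b) (BT lam)" unfolding vdec using bd[OF that] by (simp add: inner_add_right)
    also have "\<dots> = (\<Sum>c\<in>K. lam c * gram K b c)" unfolding BTK gram_def by (simp add: inner_sum_right)
    finally show ?thesis .
  qed
  have gs: "gspec K (gram_inv K)" by (rule gram_inv_spec[OF fr])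
  define gi where "gi = gram_inv K"
  have alpha: "(\<Sum>b\<in>K. gi a b * inner (brow b) v) = lam a" if aK: "a \<in> K" for a
  proof -
    have "(\<Sum>b\<in>K. gi a b * inner (brow b) v) = (\<Sum>b\<in>K. \<Sum>c\<in>K. gi a b * (lam c * gram K b c))"
      by (intro sum.cong refl) (simp add: ibv sum_distrib_left)
    also have "\<dots> = (\<Sum>c\<in>K. \<Sum>b\<in>K. gi a b * (lam c * gram K b c))" by (rule sum.swap)
    also have "\<dots> = (\<Sum>c\<in>K. lam c * (\<Sum>b\<in>K. gi a b * gram K b c))"
      by (intro sum.cong refl) (simp add: sum_distrib_left algebra_simps)
    also have "\<dots> = (\<Sum>c\<in>K. lam c * (if a = c then 1 else 0))"
      using gs aK unfolding gspec_def gi_def by (intro sum.cong refl) auto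
    also have "\<dots> = (\<Sum>c\<in>K. if a = c then lam c else 0)" by (intro sum.cong refl) auto
    also have "\<dots> = lam a" using aK by simp
    finally show ?thesis .
  qed
  define M where "M = ((\<chi> i j. \<Sum>a\<in>K. \<Sum>b\<in>K. brow a $ i * gram_inv K a b * brow b $ j) :: real^('n::{finite,linorder})^('n::{finite,linorder}))"
  have Mv: "(M *v v) $ i = (BT lam) $ i" for i
  proof -
    have "(M *v v) $ i = (\<Sum>j\<in>UNIV. (\<Sum>a\<in>K. \<Sum>b\<in>K. brow a $ i * gi a b * brow b $ j) * v$j)"
      unfolding mv_nth M_def gi_def by simp
    also have "\<dots> = (\<Sum>j\<in>UNIV. \<Sum>a\<in>K. \<Sum>b\<in>K. brow a $ i * gi a b * brow b $ j * v$j)"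
      by (simp add: sum_distrib_right)
    also have "\<dots> = (\<Sum>a\<in>K. \<Sum>j\<in>UNIV. \<Sum>b\<in>K. brow a $ i * gi a b * brow b $ j * v$j)"
      by (rule sum.swap)
    also have "\<dots> = (\<Sum>a\<in>K. \<Sum>b\<in>K. \<Sum>j\<in>UNIV. brow a $ i * gi a b * brow b $ j * v$j)"
      by (rule sum.cong[OF refl], rule sum.swap)
    also have "\<dots> = (\<Sum>a\<in>K. brow a $ i * (\<Sum>b\<in>K. gi a b * inner (brow b) v))"
      unfolding inner_vec_def by (simp add: sum_distrib_left mult.assoc)
    also have "\<dots> = (\<Sum>a\<in>K. lam a * brow a $ i)"
      by (intro sum.cong refl) (simp add: alpha)
    also have "\<dots> = (BT lam) $ i" unfolding BTK by (simp add: sum_component)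
    finally show ?thesis .
  qed
  have "Qmat K *v v = v - M *v v" unfolding Qmat_def M_def mat_diff_mv by simp
  also have "\<dots> = v - BT lam" using Mv by (simp add: vec_eq_iff)
  also have "\<dots> = d" using vdec by simp
  finally show ?thesis unfolding d_def .
qed



definition ind :: "'n::{finite,linorder} \<Rightarrow> real^('n::{finite,linorder})" where
  "ind i = (\<chi> k. if k \<le> i then 1 else 0)"

lemma ind_D: "ind i \<in> Dset" unfolding Dset_iff ind_def by auto

lemma ones_D: "(\<chi> k. (1::real)) \<in> (Dset :: (real^('n::{finite,linorder})) set)" unfolding Dset_iff by auto
lemma mones_D: "(\<chi> k. (-1::real)) \<in> (Dset :: (real^('n::{finite,linorder})) set)" unfolding Dset_iff by auto

lemma inner_ind: "inner u (ind i) = (\<Sum>k\<in>{..i}. u$k)"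
proof -
  have "inner u (ind i) = (\<Sum>k\<in>UNIV. if k \<in> {..i} then u$k else 0)"
    unfolding inner_vec_def ind_def by (intro sum.cong) auto
  also have "\<dots> = (\<Sum>k\<in>{..i}. u$k)" by (rule sum.mono_neutral_cong_right) auto
  finally show ?thesis .
qed

lemma succ_pred:
  fixes j :: "'n::{finite,linorder}"
  assumes ex: "\<exists>i. i < j"
  defines "p \<equiv> Max {i. i < j}"
  shows "p < j" "p \<in> Brows" "\<And>i. i \<in> Brows \<Longrightarrow> succ_idx i = j \<longleftrightarrow> i = p" "{..p} = {..<j}"
proof -
  have ne: "{i. i < j} \<noteq> {}" using ex by auto
  show pj: "p < j" unfolding p_def using Max_in[OF _ ne] by auto
  have pmax: "\<And>i. i < j \<Longrightarrow> i \<le> p" unfolding p_def by (intro Max_ge) auto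
  show pB: "p \<in> Brows" using pj unfolding Brows_def by auto
  show "{..p} = {..<j}" using pj pmax by (auto intro: le_less_trans)
  fix i :: 'n assume iB: "i \<in> Brows"
  show "succ_idx i = j \<longleftrightarrow> i = p"
  proof
    assume s: "succ_idx i = j"
    hence ij: "i < j" using succ_gt[OF iB] by simp
    hence "i \<le> p" by (rule pmax)
    moreover have "\<not> i < p"
    proof
      assume "i < p" hence "succ_idx i \<le> p" by (rule succ_le)
      thus False using s pj by simp
    qed
    ultimately show "i = p" by simp
  next
    assume ip: "i = p"
    have "succ_idx p \<le> j" using pj by (rule succ_le)
    moreover have "\<not> succ_idx p < j"
    proof
      assume "succ_idx p < j" hence "succ_idx p \<le> p" by (rule pmax)
      thus False using succ_gt[OF pB] by simp
    qed
    ultimately show "succ_idx i = j" using ip by simp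
  qed
qed

lemma KKT:
  fixes v :: "real^('n::{finite,linorder})"
  shows "ID v \<in> KD v"
proof -
  define d where "d = PiD v"
  define u where "u = v - d"
  define L where "L i = (\<Sum>k\<in>{..i}. u$k)" for i
  have dD: "d \<in> Dset" unfolding d_def by (rule PiD_in)
  have VI: "inner u (x - d) \<le> 0" if "x \<in> Dset" for x unfolding u_def d_def by (rule PiD_VI[OF that])
  have Lle: "L i \<le> 0" for i
  proof -
    have "inner u ((d + ind i) - d) \<le> 0" by (rule VI[OF Dset_add[OF dD ind_D]])
    thus ?thesis by (simp add: inner_ind L_def)
  qed
  have tot: "(\<Sum>k\<in>UNIV. u$k) = 0"
  proof -
    have "inner u ((d + (\<chi> k. 1)) - d) \<le> 0" by (rule VI[OF Dset_add[OF dD ones_D]])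
    moreover have "inner u ((d + (\<chi> k. -1)) - d) \<le> 0" by (rule VI[OF Dset_add[OF dD mones_D]])
    ultimately show ?thesis by (simp add: inner_vec_def sum_negf)
  qed
  have Lcomp: "L i = 0" if iB: "i \<in> Brows" and gt: "d$i > d$(succ_idx i)" for i
  proof -
    define t where "t = d$i - d$(succ_idx i)"
    have t0: "t > 0" using gt unfolding t_def by simp
    have xD: "d - t *\<^sub>R ind i \<in> Dset" unfolding Dset_iff
    proof (intro allI impI)
      fix k l :: 'n assume kl: "k \<le> l"
      have dm: "\<And>a b. a \<le> b \<Longrightarrow> d$b \<le> d$a" using dD unfolding Dset_iff by blast
      show "(d - t *\<^sub>R ind i) $ l \<le> (d - t *\<^sub>R ind i) $ k"
      proof (cases "l \<le> i")
        case True thus ?thesis using kl dm[OF kl] order_trans[OF kl True] by (simp add: ind_def)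
      next
        case False
        hence il: "i < l" by simp
        show ?thesis
        proof (cases "k \<le> i")
          case True
          have "d$l \<le> d$(succ_idx i)" using succ_le[OF il] dm by blast
          moreover have "d$i \<le> d$k" using True dm by blast
          ultimately show ?thesis using True False unfolding ind_def t_def by simp
        next
          case False2: False
          thus ?thesis using False dm[OF kl] by (simp add: ind_def)
        qed
      qed
    qed
    have "inner u ((d - t *\<^sub>R ind i) - d) \<le> 0" by (rule VI[OF xD])
    hence "- t * L i \<le> 0" by (simp add: inner_ind L_def)
    hence "L i \<ge> 0" using t0 by (simp add: zero_le_mult_iff)
    thus ?thesis using Lle[of i] by simp
  qed
  define lam where "lam i = (if i \<in> Brows then L i else 0)" for i
  have Lmax: "L j = 0" if "j \<notin> Brows" for j
  proof -
    have "{..j} = UNIV" using that unfolding Brows_def by (auto simp: not_less)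
    thus ?thesis unfolding L_def using tot by simp
  qed
  have BTu: "BT lam = u"
  proof (subst vec_eq_iff, intro allI)
    fix j :: 'n
    have "(BT lam) $ j = (\<Sum>i\<in>Brows. lam i * brow i $ j)" unfolding BT_def by (simp add: sum_component)
    also have "\<dots> = (\<Sum>i\<in>Brows. (if i = j then L i else 0) - (if succ_idx i = j then L i else 0))"
    proof (intro sum.cong refl)
      fix i :: 'n assume iB: "i \<in> Brows"
      have "succ_idx i \<noteq> i" using succ_gt[OF iB] by simp
      thus "lam i * brow i $ j = (if i = j then L i else 0) - (if succ_idx i = j then L i else 0)"
        using iB unfolding lam_def brow_nth by auto
    qed
    also have "\<dots> = (\<Sum>i\<in>Brows. if i = j then L i else 0) - (\<Sum>i\<in>Brows. if succ_idx i = j then L i else 0)"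
      by (simp add: sum_subtractf)
    also have "(\<Sum>i\<in>Brows. if i = j then L i else 0) = L j"
      using Lmax[of j] by (cases "j \<in> Brows") (simp_all add: sum.delta')
    also have "(\<Sum>i\<in>Brows. if succ_idx i = j then L i else 0) = (\<Sum>k\<in>{..<j}. u$k)"
    proof (cases "\<exists>i. i < j")
      case True
      note sp = succ_pred[OF True]
      define p where "p = Max {i. i < j}"
      have "(\<Sum>i\<in>Brows. if succ_idx i = j then L i else 0) = (\<Sum>i\<in>Brows. if i = p then L i else 0)"
        using sp(3) unfolding p_def by (intro sum.cong refl) auto
      also have "\<dots> = L p" using sp(2) unfolding p_def by (simp add: sum.delta')
      also have "\<dots> = (\<Sum>k\<in>{..<j}. u$k)" unfolding L_def p_def sp(4) ..
      finally show ?thesis .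
    next
      case False
      have "(\<Sum>i\<in>Brows. if succ_idx i = j then L i else 0) = 0"
      proof (intro sum.neutral ballI)
        fix i :: 'n assume iB: "i \<in> Brows"
        show "(if succ_idx i = j then L i else 0) = 0" using succ_gt[OF iB] False by auto
      qed
      moreover have "{..<j} = {}" using False by auto
      ultimately show ?thesis by simp
    qed
    also have "L j - (\<Sum>k\<in>{..<j}. u$k) = u$j"
    proof -
      have "{..j} = insert j {..<j}" by auto
      hence "L j = u$j + (\<Sum>k\<in>{..<j}. u$k)" unfolding L_def by simp
      thus ?thesis by simp
    qed
    finally show "BT lam $ j = u $ j" .
  qed
  have lamMD: "lam \<in> MD v" unfolding MD_def
  proof (intro CollectI conjI ballI allI impI)
    show "\<And>i. i \<notin> Brows \<Longrightarrow> lam i = 0" unfolding lam_def by simp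
    show "PiD v - v + BT lam = 0" unfolding BTu u_def d_def by simp
    show "\<And>i. i \<in> Brows \<Longrightarrow> 0 \<le> brow i \<bullet> PiD v" using Dset_brow[OF PiD_in] by blast
    show "\<And>i. i \<in> Brows \<Longrightarrow> lam i \<le> 0" unfolding lam_def using Lle by simp
    show "(\<Sum>i\<in>Brows. lam i * (brow i \<bullet> PiD v)) = 0"
    proof (intro sum.neutral ballI)
      fix i :: 'n assume iB: "i \<in> Brows"
      show "lam i * (brow i \<bullet> PiD v) = 0"
      proof (cases "d$i > d$(succ_idx i)")
        case True thus ?thesis using Lcomp[OF iB True] iB unfolding lam_def by simp
      next
        case False
        have "d$(succ_idx i) \<le> d$i" using dD succ_gt[OF iB] unfolding Dset_iff by simp
        hence "brow i \<bullet> PiD v = 0" using False iB unfolding d_def by (simp add: inner_brow)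
        thus ?thesis by simp
      qed
    qed
  qed
  have supp: "{i. lam i \<noteq> 0} \<subseteq> ID v"
  proof
    fix i :: 'n assume "i \<in> {i. lam i \<noteq> 0}"
    hence iB: "i \<in> Brows" and Li: "L i \<noteq> 0" unfolding lam_def by (auto split: if_splits)
    have "\<not> d$i > d$(succ_idx i)" using Lcomp[OF iB] Li by blast
    moreover have "d$(succ_idx i) \<le> d$i" using dD succ_gt[OF iB] unfolding Dset_iff by simp
    ultimately have "brow i \<bullet> PiD v = 0" using iB unfolding d_def by (simp add: inner_brow)
    thus "i \<in> ID v" using iB unfolding ID_def by simp
  qed
  have fr: "full_row_rank (ID v)" by (rule full_row_rank_all) (auto simp: ID_def)
  show ?thesis unfolding KD_def using lamMD supp fr by blast
qed



lemma pw_ev: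
  fixes F :: "real^'n \<Rightarrow> real^'n" and A :: "((real^'n^'n) \<times> (real^'n)) set"
  assumes cont: "continuous_on UNIV F" and fin: "finite A"
  shows "\<forall>\<^sub>F \<Delta> in at 0. \<forall>p\<in>A. F (x + \<Delta>) = fst p *v (x + \<Delta>) + snd p \<longrightarrow> F x = fst p *v x + snd p"
proof (rule eventually_ball_finite[OF fin], intro ballI)
  fix p assume "p \<in> A"
  show "\<forall>\<^sub>F \<Delta> in at 0. F (x + \<Delta>) = fst p *v (x + \<Delta>) + snd p \<longrightarrow> F x = fst p *v x + snd p"
  proof (cases "F x = fst p *v x + snd p")
    case True thus ?thesis by simp
  next
    case False
    define g where "g \<Delta> = F (x + \<Delta>) - (fst p *v (x + \<Delta>) + snd p)" for \<Delta>
    have mc: "continuous_on UNIV (\<lambda>z. fst p *v z)"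
      by (intro continuous_at_imp_continuous_on ballI matrix_vector_mult_linear_continuous_at)
    have gc: "continuous_on UNIV g" unfolding g_def
      by (intro continuous_intros continuous_on_compose2[OF cont] continuous_on_compose2[OF mc]) auto
    have "isCont g 0" using gc by (simp add: continuous_on_eq_continuous_at)
    hence "(g \<longlongrightarrow> g 0) (at 0)" by (simp add: isCont_def)
    moreover have "g 0 \<noteq> 0" using False unfolding g_def by simp
    ultimately have "\<forall>\<^sub>F \<Delta> in at 0. g \<Delta> \<noteq> 0" by (rule tendsto_imp_eventually_ne)
    thus ?thesis by eventually_elim (simp add: g_def)
  qed
qed

lemma pw_semismooth:
  fixes F :: "real^'n \<Rightarrow> real^'n" and A :: "((real^'n^'n) \<times> (real^'n)) set"
    and M :: "real^'n \<Rightarrow> (real^'n^'n) set"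
  assumes cont: "continuous_on UNIV F" and fin: "finite A"
    and mem: "\<And>y V. V \<in> M y \<Longrightarrow> \<exists>c. (V, c) \<in> A \<and> F y = V *v y + c"
  shows "\<exists>C. \<forall>\<^sub>F \<Delta> in at 0. \<forall>V \<in> M (x + \<Delta>). norm (F (x + \<Delta>) - F x - V *v \<Delta>) \<le> C * norm \<Delta> powr (1 + \<gamma>)"
proof (intro exI[of _ 0])
  show "\<forall>\<^sub>F \<Delta> in at 0. \<forall>V \<in> M (x + \<Delta>). norm (F (x + \<Delta>) - F x - V *v \<Delta>) \<le> 0 * norm \<Delta> powr (1 + \<gamma>)"
    using pw_ev[OF cont fin, of x]
  proof eventually_elim
    case (elim \<Delta>)
    show ?case
    proof
      fix V assume "V \<in> M (x + \<Delta>)"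
      then obtain c where c: "(V, c) \<in> A" "F (x + \<Delta>) = V *v (x + \<Delta>) + c" using mem by blast
      have "F x = V *v x + c" using elim c by force
      hence "F (x + \<Delta>) - F x - V *v \<Delta> = 0" using c(2) by (simp add: matrix_vector_right_distrib)
      thus "norm (F (x + \<Delta>) - F x - V *v \<Delta>) \<le> 0 * norm \<Delta> powr (1 + \<gamma>)" by simp
    qed
  qed
qed

lemma pw_dirdiff:
  fixes F :: "real^'n \<Rightarrow> real^'n" and A :: "((real^'n^'n) \<times> (real^'n)) set"
  assumes cont: "continuous_on UNIV F" and fin: "finite A"
    and cov: "\<And>y. \<exists>p\<in>A. F y = fst p *v y + snd p"
  shows "dir_differentiable F x"
  unfolding dir_differentiable_def
proof
  fix d :: "real^'n"
  define h where "h t = (1 / t) *\<^sub>R (F (x + t *\<^sub>R d) - F x)" for t :: real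
  show "\<exists>L. ((\<lambda>t. (1 / t) *\<^sub>R (F (x + t *\<^sub>R d) - F x)) \<longlongrightarrow> L) (at_right 0)"
  proof (cases "d = 0")
    case True thus ?thesis by (intro exI[of _ 0]) simp
  next
    case False
    hence nd: "norm d > 0" by simp
    obtain \<epsilon> where \<epsilon>: "\<epsilon> > 0" and E: "\<And>\<Delta>. \<Delta> \<noteq> 0 \<Longrightarrow> dist \<Delta> 0 < \<epsilon> \<Longrightarrow>
        \<forall>p\<in>A. F (x + \<Delta>) = fst p *v (x + \<Delta>) + snd p \<longrightarrow> F x = fst p *v x + snd p"
      using pw_ev[OF cont fin, of x] unfolding eventually_at by auto
    define \<delta> where "\<delta> = \<epsilon> / norm d"
    have \<delta>0: "\<delta> > 0" unfolding \<delta>_def using \<epsilon> nd by simp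
    have hval: "h t \<in> (\<lambda>p. fst p *v d) ` A" if t: "0 < t" "t < \<delta>" for t
    proof -
      have tn: "t *\<^sub>R d \<noteq> 0" using t False by simp
      have "dist (t *\<^sub>R d) 0 = t * norm d" using t by simp
      also have "\<dots> < \<delta> * norm d" using t nd by simp
      also have "\<dots> = \<epsilon>" unfolding \<delta>_def using nd by simp
      finally have E': "\<forall>p\<in>A. F (x + t *\<^sub>R d) = fst p *v (x + t *\<^sub>R d) + snd p \<longrightarrow> F x = fst p *v x + snd p"
        using E[OF tn] by blast
      obtain p where p: "p \<in> A" "F (x + t *\<^sub>R d) = fst p *v (x + t *\<^sub>R d) + snd p" using cov by blast
      have "F x = fst p *v x + snd p" using E' p by blast
      hence "h t = (1/t) *\<^sub>R (fst p *v (t *\<^sub>R d))" unfolding h_def using p(2)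
        by (simp add: matrix_vector_right_distrib)
      also have "\<dots> = fst p *v d" using t by (simp add: matrix_vector_mult_scaleR)
      finally show ?thesis using p(1) by blast
    qed
    have hc: "continuous_on {0<..<\<delta>} h" unfolding h_def
      by (intro continuous_intros continuous_on_compose2[OF cont]) auto
    have "connected (h ` {0<..<\<delta>})" by (rule connected_continuous_image[OF hc]) simp
    moreover have "finite (h ` {0<..<\<delta>})"
      by (rule finite_subset[OF _ finite_imageI[OF fin]]) (use hval in auto)
    moreover have "h ` {0<..<\<delta>} \<noteq> {}" using \<delta>0 by simp
    ultimately obtain k where k: "h ` {0<..<\<delta>} = {k}" using connected_finite_iff_sing by blast
    have "\<forall>\<^sub>F t in at_right 0. h t = k"
      unfolding eventually_at_right_field using \<delta>0 k by (intro exI[of _ \<delta>]) auto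
    hence "(h \<longlongrightarrow> k) (at_right 0)" by (rule tendsto_eventually)
    thus ?thesis unfolding h_def by blast
  qed
qed



lemma finite_vecs: "finite S \<Longrightarrow> finite {x::'a^('n::finite). \<forall>i. x$i \<in> S}"
proof -
  assume S: "finite S"
  have "{x::'a^'n. \<forall>i. x$i \<in> S} \<subseteq> vec_lambda ` (PiE UNIV (\<lambda>_. S))"
  proof
    fix x :: "'a^'n" assume "x \<in> {x. \<forall>i. x$i \<in> S}"
    hence "vec_nth x \<in> PiE UNIV (\<lambda>_. S)" by (auto simp: PiE_UNIV_domain)
    moreover have "x = vec_lambda (vec_nth x)" by simp
    ultimately show "x \<in> vec_lambda ` (PiE UNIV (\<lambda>_. S))" by blast
  qed
  moreover have "finite (PiE (UNIV::'n set) (\<lambda>_. S))" using S by (intro finite_PiE) auto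
  ultimately show ?thesis by (meson finite_imageI finite_subset)
qed

definition Z01 :: "(real^'n^'n) set" where "Z01 = {M. \<forall>i. M$i \<in> {x. \<forall>j. x$j \<in> {0,1}}}"
definition Sg :: "(real^'n) set" where "Sg = {s. \<forall>i. s$i \<in> {-1,0,1}}"

lemma finite_Z01: "finite (Z01 :: (real^('n::finite)^'n) set)"
  unfolding Z01_def by (intro finite_vecs) auto

lemma finite_Sg: "finite (Sg :: (real^('n::finite)) set)"
  unfolding Sg_def by (intro finite_vecs) auto

definition sgv :: "real^'n \<Rightarrow> real^'n" where "sgv x = (\<chi> i. sgn (x$i))"

lemma sgv_Sg: "sgv x \<in> Sg" unfolding Sg_def sgv_def by (auto simp: sgn_if)

lemma perm_mat_facts:
  assumes "is_perm_mat (P :: real^('n::finite)^'n)"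
  shows "\<exists>\<sigma>. \<sigma> permutes UNIV \<and> (\<forall>x. P *v x = pvec \<sigma> x) \<and> (\<forall>x. transpose P *v x = pvec (inv \<sigma>) x) \<and> P \<in> Z01"
proof -
  obtain \<sigma> where p: "\<sigma> permutes UNIV" and P: "P = (\<chi> i j. if \<sigma> i = j then 1 else 0)"
    using assms unfolding is_perm_mat_def by blast
  have 1: "P *v x = pvec \<sigma> x" for x
  proof -
    have "(P *v x) $ i = x $ (\<sigma> i)" for i
    proof -
      have "(P *v x) $ i = (\<Sum>j\<in>UNIV. P$i$j * x$j)" by (simp add: matrix_vector_mult_def)
      also have "\<dots> = (\<Sum>j\<in>UNIV. if j = \<sigma> i then x$j else 0)" unfolding P by (intro sum.cong) auto
      finally show ?thesis by simp
    qed
    thus ?thesis by (simp add: vec_eq_iff)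
  qed
  have 2: "transpose P *v x = pvec (inv \<sigma>) x" for x
  proof -
    have "(transpose P *v x) $ i = x $ (inv \<sigma> i)" for i
    proof -
      have "(transpose P *v x) $ i = (\<Sum>j\<in>UNIV. P$j$i * x$j)" by (simp add: matrix_vector_mult_def transpose_def)
      also have "\<dots> = (\<Sum>j\<in>UNIV. (if j = inv \<sigma> i then x$j else 0))"
        unfolding P by (intro sum.cong refl) (auto simp: permutes_inverses[OF p])
      also have "\<dots> = x $ (inv \<sigma> i)" by simp
      finally show ?thesis .
    qed
    thus ?thesis by (simp add: vec_eq_iff)
  qed
  have 3: "P \<in> Z01" unfolding P Z01_def by auto
  show ?thesis using p 1 2 3 by blast
qed

lemma diag_mv: "(diag_mat q *v x) $ i = q i * x $ i"
proof -
  have "(diag_mat q *v x) $ i = (\<Sum>j\<in>UNIV. if j = i then q i * x$j else 0)"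
  proof -
    have "(diag_mat q *v x) $ i = (\<Sum>j\<in>UNIV. diag_mat q $ i $ j * x$j)" by (simp add: matrix_vector_mult_def)
    also have "\<dots> = (\<Sum>j\<in>UNIV. if j = i then q i * x$j else 0)" unfolding diag_mat_def by (intro sum.cong) auto
    finally show ?thesis .
  qed
  thus ?thesis by simp
qed

lemma Tv_dB:
  assumes b: "\<beta> > 0" and Th: "\<Theta> \<in> dB_prox_l1 \<beta> \<eta>"
  shows "Tv \<beta> \<eta> = \<Theta> *v \<eta> - \<beta> *\<^sub>R (\<Theta> *v sgv \<eta>)" and "\<Theta> \<in> Z01"
proof -
  obtain q where q: "\<Theta> = diag_mat q" and c: "\<And>i. (\<bar>\<eta>$i\<bar> < \<beta> \<longrightarrow> q i = 0) \<and> (\<bar>\<eta>$i\<bar> = \<beta> \<longrightarrow> q i \<in> {0,1}) \<and> (\<bar>\<eta>$i\<bar> > \<beta> \<longrightarrow> q i = 1)"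
    using Th unfolding dB_prox_l1_def by blast
  have "Tsc \<beta> (\<eta>$i) = q i * \<eta>$i - \<beta> * (q i * sgn (\<eta>$i))" for i
  proof -
    consider "\<bar>\<eta>$i\<bar> < \<beta>" | "\<bar>\<eta>$i\<bar> = \<beta>" | "\<bar>\<eta>$i\<bar> > \<beta>" by linarith
    thus ?thesis
    proof cases
      case 1 thus ?thesis using c[of i] unfolding Tsc_def by (simp add: max_def)
    next
      case 2
      hence "q i = 0 \<or> q i = 1" using c[of i] by auto
      thus ?thesis using 2 b unfolding Tsc_def by (auto simp: max_def sgn_if abs_if)
    next
      case 3 thus ?thesis using c[of i] b unfolding Tsc_def by (auto simp: max_def sgn_if abs_if)
    qed
  qed
  thus "Tv \<beta> \<eta> = \<Theta> *v \<eta> - \<beta> *\<^sub>R (\<Theta> *v sgv \<eta>)"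
    unfolding q by (simp add: vec_eq_iff diag_mv sgv_def)
  have "q i \<in> {0,1}" for i using c[of i] b by (cases "\<bar>\<eta>$i\<bar> < \<beta>"; cases "\<bar>\<eta>$i\<bar> = \<beta>") auto
  thus "\<Theta> \<in> Z01" unfolding q Z01_def diag_mat_def by auto
qed

lemma dB_ne: "\<beta> > 0 \<Longrightarrow> \<exists>\<Theta>. \<Theta> \<in> dB_prox_l1 \<beta> \<eta>"
  unfolding dB_prox_l1_def
  by (rule exI[of _ "diag_mat (\<lambda>i. if \<bar>\<eta>$i\<bar> \<ge> \<beta> then 1 else 0)"]) auto



definition famA :: "real \<Rightarrow> real \<Rightarrow> ((real^('n::{finite,linorder})^('n::{finite,linorder})) \<times> (real^('n::{finite,linorder}))) set" where
  "famA \<beta> \<rho> = (\<lambda>(\<Theta>, P, K, s). (\<Theta> ** ((transpose P ** Qmat K) ** P),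
      - (\<rho> *\<^sub>R (\<Theta> *v (transpose P *v (Qmat K *v wvec)))) - \<beta> *\<^sub>R (\<Theta> *v s))) ` (Z01 \<times> Z01 \<times> UNIV \<times> Sg)"

lemma finite_famA: "finite (famA \<beta> \<rho>)"
  unfolding famA_def by (intro finite_imageI finite_cartesian_product finite_Z01 finite_Sg) simp

lemma piece:
  fixes y :: "real^('n::{finite,linorder})"
  assumes b: "\<beta> > 0" and r: "\<rho> > 0" and P: "is_perm_mat P" and ni: "nonincreasing (P *v y)"
    and Th: "\<Theta> \<in> dB_prox_l1 \<beta> (prox (pen_clust \<rho>) y)"
    and K: "K \<in> KD (P *v y - \<rho> *\<^sub>R wvec)"
  shows "\<exists>c. (\<Theta> ** ((transpose P ** Qmat K) ** P), c) \<in> famA \<beta> \<rho> \<and>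
      prox (pen_p \<beta> \<rho>) y = (\<Theta> ** ((transpose P ** Qmat K) ** P)) *v y + c"
proof -
  obtain \<sigma> where p: "\<sigma> permutes UNIV" and Pv: "\<And>x. P *v x = pvec \<sigma> x"
    and tPv: "\<And>x. transpose P *v x = pvec (inv \<sigma>) x" and PZ: "P \<in> Z01"
    using perm_mat_facts[OF P] by blast
  define v where "v = P *v y - \<rho> *\<^sub>R wvec"
  have ni': "nonincreasing (pvec \<sigma> y)" using ni Pv by simp
  have vv: "v = pvec \<sigma> y - \<rho> *\<^sub>R wvec" unfolding v_def Pv ..
  define \<eta> where "\<eta> = prox (pen_clust \<rho>) y"
  have Sy: "\<eta> = pvec (inv \<sigma>) (PiD v)"
    unfolding \<eta>_def pen_clust_eq vv using prox_formula[OF order_refl less_imp_le[OF r] p ni'] by (simp add: Tv_0)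
  have Fy: "prox (pen_p \<beta> \<rho>) y = Tv \<beta> \<eta>"
    unfolding Sy vv using prox_formula[OF less_imp_le[OF b] less_imp_le[OF r] p ni'] by (simp add: Tv_pvec)
  have ThZ: "\<Theta> \<in> Z01" and Tv: "Tv \<beta> \<eta> = \<Theta> *v \<eta> - \<beta> *\<^sub>R (\<Theta> *v sgv \<eta>)"
    using Tv_dB[OF b Th[folded \<eta>_def]] by auto
  have Qv: "PiD v = Qmat K *v v" using Qmat_proj[OF K[folded v_def]] by simp
  have eta: "\<eta> = transpose P *v (Qmat K *v (P *v y)) - \<rho> *\<^sub>R (transpose P *v (Qmat K *v wvec))"
  proof -
    have e0: "\<eta> = transpose P *v (Qmat K *v v)" unfolding Sy Qv tPv ..
    have e1: "Qmat K *v v = Qmat K *v (P *v y) - \<rho> *\<^sub>R (Qmat K *v wvec)"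
      unfolding v_def by (simp only: matrix_vector_mult_diff_distrib matrix_vector_mult_scaleR)
    show ?thesis unfolding e0 e1 by (simp only: matrix_vector_mult_diff_distrib matrix_vector_mult_scaleR)
  qed
  define c where "c = - (\<rho> *\<^sub>R (\<Theta> *v (transpose P *v (Qmat K *v wvec)))) - \<beta> *\<^sub>R (\<Theta> *v sgv \<eta>)"
  have f1: "prox (pen_p \<beta> \<rho>) y = \<Theta> *v \<eta> - \<beta> *\<^sub>R (\<Theta> *v sgv \<eta>)" by (simp only: Fy Tv)
  have f2: "\<Theta> *v \<eta> = \<Theta> *v (transpose P *v (Qmat K *v (P *v y))) - \<rho> *\<^sub>R (\<Theta> *v (transpose P *v (Qmat K *v wvec)))"
    by (subst eta) (simp only: matrix_vector_mult_diff_distrib matrix_vector_mult_scaleR)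
  have ag: "\<And>a b d :: real^('n::{finite,linorder}). a - b - d = a + (- b - d)" by simp
  have "prox (pen_p \<beta> \<rho>) y = \<Theta> *v (transpose P *v (Qmat K *v (P *v y))) + c"
    unfolding f1 f2 c_def by (rule ag)
  also have "\<Theta> *v (transpose P *v (Qmat K *v (P *v y))) = (\<Theta> ** ((transpose P ** Qmat K) ** P)) *v y"
    by (simp add: matrix_vector_mul_assoc matrix_mul_assoc)
  finally have e: "prox (pen_p \<beta> \<rho>) y = (\<Theta> ** ((transpose P ** Qmat K) ** P)) *v y + c" .
  have "(\<Theta> ** ((transpose P ** Qmat K) ** P), c) \<in> famA \<beta> \<rho>"
    unfolding famA_def c_def
    by (rule image_eqI[where x="(\<Theta>, P, K, sgv \<eta>)"]) (auto simp: ThZ PZ sgv_Sg)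
  thus ?thesis using e by blast
qed

theorem mainTheorem7:
  fixes \<beta> \<rho> \<gamma> :: real
    and Psel :: "real^('n::{finite,linorder}) \<Rightarrow> real^('n::{finite,linorder})^('n::{finite,linorder})"
  assumes "\<beta> > 0" and "\<rho> > 0" and "\<gamma> > 0"
    and "\<forall>y. is_perm_mat (Psel y) \<and> nonincreasing (Psel y *v y)"
  shows "(\<forall>x::real^('n::{finite,linorder}). dir_differentiable (prox (pen_p \<beta> \<rho>)) x) \<and>
    (\<forall>x. \<exists>C. \<forall>\<^sub>F \<Delta> in at 0. \<forall>V \<in> Mset Psel \<beta> \<rho> (x + \<Delta>).
        norm (prox (pen_p \<beta> \<rho>) (x + \<Delta>) - prox (pen_p \<beta> \<rho>) x - V *v \<Delta>)
          \<le> C * norm \<Delta> powr (1 + \<gamma>))"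
proof -
  note b = assms(1) and r = assms(2) and Ps = assms(4)
  have cont: "continuous_on UNIV (prox (pen_p \<beta> \<rho>))"
    using prox_cont[OF less_imp_le[OF b] less_imp_le[OF r]] .
  have cov: "\<exists>p\<in>famA \<beta> \<rho>. prox (pen_p \<beta> \<rho>) y = fst p *v y + snd p" for y :: "real^('n::{finite,linorder})"
  proof -
    obtain \<Theta> where Th: "\<Theta> \<in> dB_prox_l1 \<beta> (prox (pen_clust \<rho>) y)" using dB_ne[OF b] by blast
    have K: "ID (Psel y *v y - \<rho> *\<^sub>R wvec) \<in> KD (Psel y *v y - \<rho> *\<^sub>R wvec)" by (rule KKT)
    have P1: "is_perm_mat (Psel y)" and P2: "nonincreasing (Psel y *v y)" using Ps by auto
    obtain c where c: "(\<Theta> ** ((transpose (Psel y) ** Qmat (ID (Psel y *v y - \<rho> *\<^sub>R wvec))) ** Psel y), c) \<in> famA \<beta> \<rho>"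
      "prox (pen_p \<beta> \<rho>) y = (\<Theta> ** ((transpose (Psel y) ** Qmat (ID (Psel y *v y - \<rho> *\<^sub>R wvec))) ** Psel y)) *v y + c"
      using piece[OF b r P1 P2 Th K] by blast
    show ?thesis by (rule bexI[OF _ c(1)]) (simp add: c(2))
  qed
  have mem: "\<exists>c. (V, c) \<in> famA \<beta> \<rho> \<and> prox (pen_p \<beta> \<rho>) y = V *v y + c"
    if V: "V \<in> Mset Psel \<beta> \<rho> y" for y V
  proof -
    obtain \<Theta> Q where VQ: "V = \<Theta> ** Q" and Th: "\<Theta> \<in> dB_prox_l1 \<beta> (prox (pen_clust \<rho>) y)"
      and Q: "Q \<in> QS Psel \<rho> y"
      using V unfolding Mset_def by blast
    obtain K where QK: "Q = transpose (Psel y) ** Qmat K ** Psel y" and K: "K \<in> KD (Psel y *v y - \<rho> *\<^sub>R wvec)"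
      using Q unfolding QS_def QD_def by blast
    have P1: "is_perm_mat (Psel y)" and P2: "nonincreasing (Psel y *v y)" using Ps by auto
    show ?thesis using piece[OF b r P1 P2 Th K] unfolding VQ QK by blast
  qed
  show ?thesis
  proof
    show "\<forall>x::real^('n::{finite,linorder}). dir_differentiable (prox (pen_p \<beta> \<rho>)) x"
      using pw_dirdiff[OF cont finite_famA cov] by blast
    show "\<forall>x. \<exists>C. \<forall>\<^sub>F \<Delta> in at 0. \<forall>V \<in> Mset Psel \<beta> \<rho> (x + \<Delta>).
        norm (prox (pen_p \<beta> \<rho>) (x + \<Delta>) - prox (pen_p \<beta> \<rho>) x - V *v \<Delta>) \<le> C * norm \<Delta> powr (1 + \<gamma>)"
      using pw_semismooth[OF cont finite_famA mem] by blast
  qed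
qed

end
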